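(* Let $\ell\in\mathbb{N}$, $h\in\bigwedge(V_{2\ell}^* )$, let $G$ be an Eulerian graph and $\phi:E(G)\to[\ell]$. Then $s_{h,\phi}(G,\omega,\kappa)$ has the same value for all Eulerian orientations $\omega$ of $G$ and all local orderings $\kappa$ compatible with $\omega$. (Consequently, since $s_h((G,\omega,\kappa))=\sum_{\phi:E(G)\to[\ell]}s_{h,\phi}(G,\omega,\kappa)$, the same holds for $s_h((G,\omega,\kappa))$.)
   Context: Setup: $V_{2\ell}=\mathbb{C}^{2\ell}$ with standard basis $e_1,\dots,e_{2\ell}$; $f_i=-e_{i+\ell}$ for $i\le\ell$, $f_i=e_{i-\ell}$ for $i>\ell$. $\bigwedge(V_{2\ell}^* )=\bigoplus_{n=0}^{2\ell}\bigwedge^n(V_{2\ell}^* )$, and $h$ applied to an $n$-fold tensor means its skew-symmetric component $h^n$ applied to it. Graphs may have loops and multiple edges; Eulerian means every vertex has even degree. An Eulerian orientation $\omega$ makes in-degree equal out-degree at each vertex (a loop gives one incoming and one outgoing arc). A compatible local ordering $\kappa$ consists at each vertex $v$ of degree $d(v)$ of bijections $\kappa_v^-:\delta^-(v)\to\{1,3,\dots,d(v)-1\}$ and $\kappa_v^+:\delta^+(v)\to\{2,4,\dots,d(v)\}$; $\kappa_v^{-1}(i)$ is the arc at $v$ with label $i$. The $\kappa$-circuits are the closed walks $(v_1,a_1,\dots,a_i,v_i,a_{i+1},\dots,v_1)$ with $\kappa^-_{v_i}(a_i)+1=\kappa^+_{v_i}(a_{i+1})$ into which $\kappa$ decomposes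 the edge set; $c(G,\kappa)$ is their number. For $\phi:E(G)\to[\ell]$, $s_{h,\phi}(G,\omega,\kappa)=(-1)^{c(G,\kappa)}\sum_{\psi:E(G)\to\{0,\ell\}}\prod_{v\in V(G)} h\big(\bigotimes_{i=1,3,\dots,d(v)-1} e_{(\phi+\psi)(\kappa_v^{-1}(i))}\otimes f_{(\phi+\psi)(\kappa_v^{-1}(i+1))}\big)$, and $s_h((G,\omega,\kappa))$ is the same expression with the sum over all $\phi':E(G)\to[2\ell]$ in place of $\phi+\psi$. *)

theory Defs
  imports Complex_Main "HOL-Library.FuncSet"
begin

text \<open>An element h of the exterior algebra of the dual of V_(2l) is represented by its
values on tuples of standard basis vectors: H xs = h^n(e_(xs!0), ..., e_(xs!(n-1)))
where n = length xs.  Each component h^n is a skew-symmetric multilinear form,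
hence determined by these values, and the values are alternating under swapping
two positions.  (Components with n > 2l vanish automatically.)\<close>

definition alt_elem :: "nat \<Rightarrow> (nat list \<Rightarrow> complex) \<Rightarrow> bool" where
  "alt_elem l H \<longleftrightarrow>
     (\<forall>xs i j. set xs \<subseteq> {1..2*l} \<longrightarrow> i < length xs \<longrightarrow> j < length xs \<longrightarrow> i \<noteq> j \<longrightarrow>
        H (xs[i := xs ! j, j := xs ! i]) = - H xs)"

text \<open>f_i = - e_(i+l) for i \<le> l, f_i = e_(i-l) for i > l.\<close>
definition f_idx :: "nat \<Rightarrow> nat \<Rightarrow> nat" where
  "f_idx l i = (if i \<le> l then i + l else i - l)"

definition f_sgn :: "nat \<Rightarrow> nat \<Rightarrow> complex" where
  "f_sgn l i = (if i \<le> l then -1 else 1)"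

text \<open>A graph: finite vertex set V, finite edge set E, each edge e has an (unordered)
pair of ends given by ends e (a loop has equal ends); multiple edges allowed.\<close>
definition graph :: "'v set \<Rightarrow> 'e set \<Rightarrow> ('e \<Rightarrow> 'v \<times> 'v) \<Rightarrow> bool" where
  "graph V E ends \<longleftrightarrow> finite V \<and> finite E \<and> (\<forall>e\<in>E. fst (ends e) \<in> V \<and> snd (ends e) \<in> V)"

text \<open>degree: a loop counts twice\<close>
definition deg :: "'e set \<Rightarrow> ('e \<Rightarrow> 'v \<times> 'v) \<Rightarrow> 'v \<Rightarrow> nat" where
  "deg E ends v = card {e\<in>E. fst (ends e) = v} + card {e\<in>E. snd (ends e) = v}"

definition eulerian :: "'v set \<Rightarrow> 'e set \<Rightarrow> ('e \<Rightarrow> 'v \<times> 'v) \<Rightarrow> bool" where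
  "eulerian V E ends \<longleftrightarrow> (\<forall>v\<in>V. even (deg E ends v))"

definition orientation :: "'e set \<Rightarrow> ('e \<Rightarrow> 'v \<times> 'v) \<Rightarrow> ('e \<Rightarrow> 'v \<times> 'v) \<Rightarrow> bool" where
  "orientation E ends \<omega> \<longleftrightarrow> (\<forall>e\<in>E. \<omega> e = ends e \<or> \<omega> e = prod.swap (ends e))"

definition in_arcs :: "'e set \<Rightarrow> ('e \<Rightarrow> 'v \<times> 'v) \<Rightarrow> 'v \<Rightarrow> 'e set" where
  "in_arcs E \<omega> v = {e\<in>E. snd (\<omega> e) = v}"

definition out_arcs :: "'e set \<Rightarrow> ('e \<Rightarrow> 'v \<times> 'v) \<Rightarrow> 'v \<Rightarrow> 'e set" where
  "out_arcs E \<omega> v = {e\<in>E. fst (\<omega> e) = v}"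

definition eulerian_orientation ::
  "'v set \<Rightarrow> 'e set \<Rightarrow> ('e \<Rightarrow> 'v \<times> 'v) \<Rightarrow> ('e \<Rightarrow> 'v \<times> 'v) \<Rightarrow> bool" where
  "eulerian_orientation V E ends \<omega> \<longleftrightarrow> orientation E ends \<omega> \<and>
     (\<forall>v\<in>V. card (in_arcs E \<omega> v) = card (out_arcs E \<omega> v))"

definition compatible_ordering ::
  "'v set \<Rightarrow> 'e set \<Rightarrow> ('e \<Rightarrow> 'v \<times> 'v) \<Rightarrow> ('e \<Rightarrow> 'v \<times> 'v)
    \<Rightarrow> ('v \<Rightarrow> 'e \<Rightarrow> nat) \<Rightarrow> ('v \<Rightarrow> 'e \<Rightarrow> nat) \<Rightarrow> bool" where
  "compatible_ordering V E ends \<omega> km kp \<longleftrightarrow>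
     (\<forall>v\<in>V. bij_betw (km v) (in_arcs E \<omega> v) {i. odd i \<and> i < deg E ends v}
          \<and> bij_betw (kp v) (out_arcs E \<omega> v) {i. even i \<and> 2 \<le> i \<and> i \<le> deg E ends v})"

definition arc_lab ::
  "'e set \<Rightarrow> ('e \<Rightarrow> 'v \<times> 'v) \<Rightarrow> ('v \<Rightarrow> 'e \<Rightarrow> nat) \<Rightarrow> ('v \<Rightarrow> 'e \<Rightarrow> nat) \<Rightarrow> 'v \<Rightarrow> nat \<Rightarrow> 'e" where
  "arc_lab E \<omega> km kp v i =
     (if odd i then (THE e. e \<in> in_arcs E \<omega> v \<and> km v e = i)
      else (THE e. e \<in> out_arcs E \<omega> v \<and> kp v e = i))"

definition next_arc ::
  "'e set \<Rightarrow> ('e \<Rightarrow> 'v \<times> 'v) \<Rightarrow> ('v \<Rightarrow> 'e \<Rightarrow> nat) \<Rightarrow> ('v \<Rightarrow> 'e \<Rightarrow> nat) \<Rightarrow> 'e \<Rightarrow> 'e" where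
  "next_arc E \<omega> km kp a = arc_lab E \<omega> km kp (snd (\<omega> a)) (km (snd (\<omega> a)) a + 1)"

definition circuits ::
  "'e set \<Rightarrow> ('e \<Rightarrow> 'v \<times> 'v) \<Rightarrow> ('v \<Rightarrow> 'e \<Rightarrow> nat) \<Rightarrow> ('v \<Rightarrow> 'e \<Rightarrow> nat) \<Rightarrow> 'e set set" where
  "circuits E \<omega> km kp = {{(next_arc E \<omega> km kp ^^ n) a | n. True} | a. a \<in> E}"

definition num_circuits ::
  "'e set \<Rightarrow> ('e \<Rightarrow> 'v \<times> 'v) \<Rightarrow> ('v \<Rightarrow> 'e \<Rightarrow> nat) \<Rightarrow> ('v \<Rightarrow> 'e \<Rightarrow> nat) \<Rightarrow> nat" where
  "num_circuits E \<omega> km kp = card (circuits E \<omega> km kp)"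

text \<open>h( e_(p(kappa^-1 1)) (x) f_(p(kappa^-1 2)) (x) ... (x) e_(p(kappa^-1 (d-1))) (x) f_(p(kappa^-1 d)) )\<close>
definition local_val ::
  "nat \<Rightarrow> (nat list \<Rightarrow> complex) \<Rightarrow> 'e set \<Rightarrow> ('e \<Rightarrow> 'v \<times> 'v) \<Rightarrow> ('e \<Rightarrow> 'v \<times> 'v)
    \<Rightarrow> ('v \<Rightarrow> 'e \<Rightarrow> nat) \<Rightarrow> ('v \<Rightarrow> 'e \<Rightarrow> nat) \<Rightarrow> ('e \<Rightarrow> nat) \<Rightarrow> 'v \<Rightarrow> complex" where
  "local_val l H E ends \<omega> km kp p v =
     (let m = deg E ends v div 2;
          a = (\<lambda>j. p (arc_lab E \<omega> km kp v (2*j+1)));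
          b = (\<lambda>j. p (arc_lab E \<omega> km kp v (2*j+2)))
      in (\<Prod>j<m. f_sgn l (b j)) * H (concat (map (\<lambda>j. [a j, f_idx l (b j)]) [0..<m])))"

definition s_phi ::
  "nat \<Rightarrow> (nat list \<Rightarrow> complex) \<Rightarrow> 'v set \<Rightarrow> 'e set \<Rightarrow> ('e \<Rightarrow> 'v \<times> 'v) \<Rightarrow> ('e \<Rightarrow> nat)
    \<Rightarrow> ('e \<Rightarrow> 'v \<times> 'v) \<Rightarrow> ('v \<Rightarrow> 'e \<Rightarrow> nat) \<Rightarrow> ('v \<Rightarrow> 'e \<Rightarrow> nat) \<Rightarrow> complex" where
  "s_phi l H V E ends \<phi> \<omega> km kp =
     (-1) ^ num_circuits E \<omega> km kp *
     (\<Sum>\<psi>\<in>PiE E (\<lambda>_. {0, l}). \<Prod>v\<in>V. local_val l H E ends \<omega> km kp (\<lambda>e. \<phi> e + \<psi> e) v)"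

definition s_h ::
  "nat \<Rightarrow> (nat list \<Rightarrow> complex) \<Rightarrow> 'v set \<Rightarrow> 'e set \<Rightarrow> ('e \<Rightarrow> 'v \<times> 'v)
    \<Rightarrow> ('e \<Rightarrow> 'v \<times> 'v) \<Rightarrow> ('v \<Rightarrow> 'e \<Rightarrow> nat) \<Rightarrow> ('v \<Rightarrow> 'e \<Rightarrow> nat) \<Rightarrow> complex" where
  "s_h l H V E ends \<omega> km kp =
     (-1) ^ num_circuits E \<omega> km kp *
     (\<Sum>\<phi>'\<in>PiE E (\<lambda>_. {1..2*l}). \<Prod>v\<in>V. local_val l H E ends \<omega> km kp \<phi>' v)"

end

theory Submission
  imports Defs "HOL-Combinatorics.Cycles"
begin

definition orb :: "('a \<Rightarrow> 'a) \<Rightarrow> 'a \<Rightarrow> 'a set" where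
  "orb f a = {(f ^^ n) a | n. True}"

definition orbs :: "('a \<Rightarrow> 'a) \<Rightarrow> 'a set \<Rightarrow> 'a set set" where
  "orbs f D = {orb f a | a. a \<in> D}"

lemma orbs_image: "orbs f D = orb f ` D"
  unfolding orbs_def by auto

lemma funpow_agree:
  assumes "\<forall>x\<in>D. f x = g x" "f ` D \<subseteq> D" "a \<in> D"
  shows "(f ^^ n) a = (g ^^ n) a \<and> (f ^^ n) a \<in> D"
  using assms by (induction n) auto

lemma orb_agree:
  assumes "\<forall>x\<in>D. f x = g x" "f ` D \<subseteq> D" "a \<in> D"
  shows "orb f a = orb g a"
  using funpow_agree[OF assms] unfolding orb_def by metis

lemma orbs_agree:
  assumes "\<forall>x\<in>D. f x = g x" "f ` D \<subseteq> D"
  shows "orbs f D = orbs g D"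
  using orb_agree[OF assms] unfolding orbs_image by (intro image_cong) auto

lemma sign_cycle:
  "distinct cs \<Longrightarrow> sign (cycle_of_list cs) = (-1) ^ (length cs - 1)"
proof (induction cs rule: cycle_of_list.induct)
  case (1 i j cs)
  have "sign (cycle_of_list (i # j # cs)) = sign (transpose i j \<circ> cycle_of_list (j # cs))"
    by (simp only: cycle_of_list.simps)
  also have "\<dots> = sign (transpose i j) * sign (cycle_of_list (j # cs))"
    by (rule sign_compose[OF permutation_swap_id permutation_of_cycle])
  also have "\<dots> = (-1) * (-1) ^ (length (j # cs) - 1)"
    using 1 by (simp add: sign_swap_id)
  finally show ?case by (simp del: cycle_of_list.simps)
qed simp_all

lemma orb_range: "orb p s = range (\<lambda>i. (p ^^ i) s)"
  unfolding orb_def by auto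

lemma orb_same:
  assumes "permutation p" "a \<in> orb p s"
  shows "orb p a = orb p s"
proof -
  obtain i where i: "a = (p ^^ i) s" using assms(2) unfolding orb_def by auto
  let ?L = "least_power p s"
  have L: "(p ^^ ?L) s = s" "?L > 0" using least_power_of_permutation[OF assms(1)] by auto
  have Lk: "(p ^^ (?L * k)) s = s" for k
    using L(1) by (induction k) (simp_all add: funpow_add)
  have sub: "orb p ((p ^^ i) s) \<subseteq> orb p s" if "True" for i
  proof
    fix x assume "x \<in> orb p ((p ^^ i) s)"
    then obtain n where "x = (p ^^ n) ((p ^^ i) s)" unfolding orb_def by auto
    hence "x = (p ^^ (n + i)) s" by (simp add: funpow_add)
    thus "x \<in> orb p s" unfolding orb_def by blast
  qed
  have "orb p a \<subseteq> orb p s" unfolding i by (rule sub) simp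
  moreover have "s \<in> orb p a"
  proof -
    have "?L * i \<ge> i" using L(2) by simp
    hence e: "?L * i - i + i = ?L * i" by simp
    have "(p ^^ (?L * i - i)) a = (p ^^ (?L * i - i + i)) s"
      unfolding i by (simp add: funpow_add)
    also have "\<dots> = s" unfolding e by (rule Lk)
    finally have "s = (p ^^ (?L * i - i)) a" by simp
    thus ?thesis unfolding orb_def by blast
  qed
  moreover have "orb p s \<subseteq> orb p a" if sa: "s \<in> orb p a"
  proof
    fix x assume "x \<in> orb p s"
    then obtain n where n: "x = (p ^^ n) s" unfolding orb_def by auto
    obtain k where k: "s = (p ^^ k) a" using sa unfolding orb_def by auto
    have "x = (p ^^ (n + k)) a" unfolding n k by (simp add: funpow_add)
    thus "x \<in> orb p a" unfolding orb_def by blast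
  qed
  ultimately show ?thesis by blast
qed

lemma sign_orbs:
  assumes "p permutes S" "finite S"
  shows "(-1::int) ^ card S = sign p * (-1) ^ card (orbs p S)"
  using assms
proof (induction "card S" arbitrary: S p rule: less_induct)
  case less
  show ?case
  proof (cases "S = {}")
    case True
    then have "p = id" using less(2) by simp
    then show ?thesis using True by (simp add: orbs_image)
  next
    case False
    have perm: "permutation p" using less(2-3) unfolding permutation_permutes by blast
    then obtain s where s: "s \<in> S" using False by blast
    define Ob where "Ob = set (support p s)"
    have Oorb: "Ob = orb p s" unfolding Ob_def support_set[OF perm] orb_range ..
    define q where "q = (\<lambda>y. if y \<in> (S - Ob) then p y else y)"
    have qp: "q permutes (S - Ob)" using semidecomposition[OF less(2-3)] unfolding q_def Ob_def .
    have pdec: "(cycle_of_list (support p s) \<circ> q) = p"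
    proof
      fix a
      consider "a \<in> S - Ob" | "a \<in> Ob" | "a \<notin> S" "a \<notin> Ob"
        by blast
      thus "((cycle_of_list (support p s) \<circ> q)) a = p a"
      proof cases
        case 1
        have "(p ^^ 1) a \<in> set (support p a)"
          unfolding support_set[OF perm] by blast
        with 1 have "p a \<notin> set (support p s)"
          using disjoint_support'[OF perm, of a s] unfolding Ob_def by auto
        with 1 show ?thesis
          using id_outside_supp[of _ "support p s"] unfolding q_def by simp
      next
        case 2 thus ?thesis
          using cycle_restrict[OF perm] unfolding q_def Ob_def by simp
      next
        case 3 thus ?thesis
          using id_outside_supp 3(2) less(2) permutes_not_in unfolding q_def Ob_def by fastforce
      qed
    qed
    have OS: "Ob \<subseteq> S"
    proof -
      have "(p ^^ i) s \<in> S" for i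
        using s unfolding permutes_in_image[OF permutes_funpow[OF less(2)]] .
      thus ?thesis unfolding Oorb orb_def by auto
    qed
    have sO: "s \<in> Ob" unfolding Oorb orb_def by (auto intro: exI[of _ 0])
    have finO: "finite Ob" using OS less(3) finite_subset by blast
    have cardO: "card Ob = length (support p s)"
      unfolding Ob_def using distinct_card[OF cycle_of_permutation[OF perm]] .
    have clt: "card (S - Ob) < card S"
      using sO s less(3) by (intro psubset_card_mono) auto
    have IH: "(-1::int) ^ card (S - Ob) = sign q * (-1) ^ card (orbs q (S - Ob))"
      using less(1)[OF clt qp] less(3) by simp
    have pSO: "p ` (S - Ob) \<subseteq> S - Ob"
    proof
      fix y assume "y \<in> p ` (S - Ob)"
      then obtain x where x: "x \<in> S - Ob" "y = p x" by auto
      have "y \<in> S" using x less(2) permutes_in_image by fastforce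
      moreover have "y \<notin> Ob"
      proof
        assume "y \<in> Ob"
        have "y \<in> orb p x" unfolding orb_def x by (auto intro: exI[of _ 1])
        hence "orb p y = orb p x" using orb_same[OF perm] by blast
        moreover have "orb p y = orb p s" using \<open>y \<in> Ob\<close> Oorb orb_same[OF perm] by blast
        moreover have "x \<in> orb p x" unfolding orb_def by (auto intro: exI[of _ 0])
        ultimately show False using x Oorb by auto
      qed
      ultimately show "y \<in> S - Ob" by blast
    qed
    have qorb: "orb q a = orb p a" if "a \<in> S - Ob" for a
      using orb_agree[of "S - Ob" p q a] pSO that unfolding q_def by auto
    have orbsq: "orbs q (S - Ob) = orbs p (S - Ob)"
      unfolding orbs_image using qorb by (intro image_cong) auto
    have orbsp: "orbs p S = insert Ob (orbs p (S - Ob))"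
    proof -
      have "orb p a = Ob" if "a \<in> Ob" for a using orb_same[OF perm] that Oorb by auto
      hence "orbs p Ob = {Ob}" using sO unfolding orbs_image by auto
      moreover have SU: "Ob \<union> (S - Ob) = S" using OS by blast
      moreover have "orbs p S = orbs p Ob \<union> orbs p (S - Ob)"
        unfolding orbs_image image_Un[symmetric] SU ..
      ultimately show ?thesis by simp
    qed
    have Onot: "Ob \<notin> orbs p (S - Ob)"
    proof
      assume "Ob \<in> orbs p (S - Ob)"
      then obtain a where a: "a \<in> S - Ob" "Ob = orb p a" unfolding orbs_image by auto
      have "a \<in> orb p a" unfolding orb_def by (auto intro: exI[of _ 0])
      thus False using a by auto
    qed
    have finorbs: "finite (orbs p (S - Ob))"
      unfolding orbs_image using less(3) by simp
    have c1: "card (orbs p S) = Suc (card (orbs q (S - Ob)))"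
      using orbsp Onot finorbs orbsq by simp
    have c2: "card S = card Ob + card (S - Ob)"
      using card_Diff_subset[OF finO OS] card_mono[OF less(3) OS] by simp
    have qperm: "permutation q" using qp less(3) permutation_permutes by blast
    have "sign p = sign (cycle_of_list (support p s) \<circ> q)" using pdec by simp
    also have "\<dots> = sign (cycle_of_list (support p s)) * sign q"
      by (rule sign_compose[OF permutation_of_cycle qperm])
    also have "sign (cycle_of_list (support p s)) = (-1) ^ (card Ob - 1)"
      using sign_cycle[OF cycle_of_permutation[OF perm]] cardO by simp
    finally have sp: "sign p = (-1) ^ (card Ob - 1) * sign q" .
    have "card Ob \<noteq> 0" using sO finO by auto
    then obtain k where k: "card Ob = Suc k" using not0_implies_Suc by blast
    have "(-1::int) ^ card S = (-1) ^ Suc k * (-1) ^ card (S - Ob)" by (simp add: c2 k power_add)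
    also have "\<dots> = (-1) ^ Suc k * (sign q * (-1) ^ card (orbs q (S - Ob)))" by (simp only: IH)
    also have "\<dots> = sign p * (-1) ^ card (orbs p S)" by (simp add: sp c1 k)
    finally show ?thesis .
  qed
qed

definition lst :: "(nat \<Rightarrow> 'a) \<Rightarrow> (nat \<Rightarrow> 'a) \<Rightarrow> nat \<Rightarrow> 'a list" where
  "lst A B m = map (\<lambda>k. if even k then A (k div 2) else B (k div 2)) [0..<2*m]"

lemma lst_Suc: "lst A B (Suc m) = lst A B m @ [A m, B m]"
  by (simp add: lst_def)

lemma concat_lst: "concat (map (\<lambda>j. [A j, B j]) [0..<m]) = lst A B m"
  by (induction m) (simp_all add: lst_Suc, simp add: lst_def)

lemma length_lst[simp]: "length (lst A B m) = 2 * m"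
  by (simp add: lst_def)

lemma lst_nth: "k < 2 * m \<Longrightarrow> lst A B m ! k = (if even k then A (k div 2) else B (k div 2))"
  by (simp add: lst_def)

lemma set_lst: "(\<And>j. j < m \<Longrightarrow> A j \<in> R \<and> B j \<in> R) \<Longrightarrow> set (lst A B m) \<subseteq> R"
  by (auto simp: lst_def)

lemma lst_swapA:
  assumes "i < m" "j < m" "i \<noteq> j"
  shows "lst (\<lambda>k. A (transpose i j k)) B m = (lst A B m)[2*i := lst A B m ! (2*j), 2*j := lst A B m ! (2*i)]"
proof (rule nth_equalityI)
  fix k assume k: "k < length (lst (\<lambda>k. A (transpose i j k)) B m)"
  hence k2: "k < 2 * m" by simp
  show "lst (\<lambda>k. A (transpose i j k)) B m ! k = (lst A B m)[2*i := lst A B m ! (2*j), 2*j := lst A B m ! (2*i)] ! k"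
  proof (cases "k = 2 * j")
    case True then show ?thesis using assms by (simp add: lst_nth nth_list_update)
  next
    case False
    show ?thesis
    proof (cases "k = 2 * i")
      case True then show ?thesis using assms False by (simp add: lst_nth nth_list_update)
    next
      case False2: False
      have "even k \<Longrightarrow> k div 2 \<noteq> i" "even k \<Longrightarrow> k div 2 \<noteq> j" using False False2 by auto
      then show ?thesis using assms False False2 k2 by (simp add: lst_nth nth_list_update transpose_def)
    qed
  qed
qed simp

lemma lst_swapB:
  assumes "i < m" "j < m" "i \<noteq> j"
  shows "lst A (\<lambda>k. B (transpose i j k)) m = (lst A B m)[2*i+1 := lst A B m ! (2*j+1), 2*j+1 := lst A B m ! (2*i+1)]"
proof (rule nth_equalityI)
  fix k assume k: "k < length (lst A (\<lambda>k. B (transpose i j k)) m)"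
  hence k2: "k < 2 * m" by simp
  show "lst A (\<lambda>k. B (transpose i j k)) m ! k = (lst A B m)[2*i+1 := lst A B m ! (2*j+1), 2*j+1 := lst A B m ! (2*i+1)] ! k"
  proof (cases "k = 2 * j + 1")
    case True then show ?thesis using assms by (simp add: lst_nth nth_list_update)
  next
    case False
    show ?thesis
    proof (cases "k = 2 * i + 1")
      case True then show ?thesis using assms False by (simp add: lst_nth nth_list_update)
    next
      case False2: False
      have "odd k \<Longrightarrow> k div 2 \<noteq> i" "odd k \<Longrightarrow> k div 2 \<noteq> j" using False False2 by auto
      then show ?thesis using assms False False2 k2 by (simp add: lst_nth nth_list_update transpose_def)
    qed
  qed
qed simp

lemma H_swapA:
  assumes "alt_elem l H" "set (lst A B m) \<subseteq> {1..2*l}" "i < m" "j < m" "i \<noteq> j"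
  shows "H (lst (\<lambda>k. A (transpose i j k)) B m) = - H (lst A B m)"
  using assms(1) unfolding alt_elem_def lst_swapA[OF assms(3-5)]
  using assms(2-5) by auto

lemma H_swapB:
  assumes "alt_elem l H" "set (lst A B m) \<subseteq> {1..2*l}" "i < m" "j < m" "i \<noteq> j"
  shows "H (lst A (\<lambda>k. B (transpose i j k)) m) = - H (lst A B m)"
  using assms(1) unfolding alt_elem_def lst_swapB[OF assms(3-5)]
  using assms(2-5) by auto

lemma lst_pairswap_step:
  assumes "k < m"
  shows "lst (\<lambda>j. if j < Suc k then B j else A j) (\<lambda>j. if j < Suc k then A j else B j) m =
    (lst (\<lambda>j. if j < k then B j else A j) (\<lambda>j. if j < k then A j else B j) m)
      [2*k := lst (\<lambda>j. if j < k then B j else A j) (\<lambda>j. if j < k then A j else B j) m ! (2*k+1),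
       2*k+1 := lst (\<lambda>j. if j < k then B j else A j) (\<lambda>j. if j < k then A j else B j) m ! (2*k)]"
proof (rule nth_equalityI)
  fix q assume "q < length (lst (\<lambda>j. if j < Suc k then B j else A j) (\<lambda>j. if j < Suc k then A j else B j) m)"
  hence q: "q < 2 * m" by simp
  show "lst (\<lambda>j. if j < Suc k then B j else A j) (\<lambda>j. if j < Suc k then A j else B j) m ! q =
    (lst (\<lambda>j. if j < k then B j else A j) (\<lambda>j. if j < k then A j else B j) m)
      [2*k := lst (\<lambda>j. if j < k then B j else A j) (\<lambda>j. if j < k then A j else B j) m ! (2*k+1),
       2*k+1 := lst (\<lambda>j. if j < k then B j else A j) (\<lambda>j. if j < k then A j else B j) m ! (2*k)] ! q"
  proof (cases "q = 2 * k \<or> q = 2 * k + 1")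
    case True then show ?thesis using assms q by (auto simp: lst_nth nth_list_update)
  next
    case False
    hence "q div 2 \<noteq> k" by auto
    then show ?thesis using assms q False by (auto simp: lst_nth nth_list_update)
  qed
qed simp

lemma H_pairswap:
  assumes "alt_elem l H" "\<And>j. j < m \<Longrightarrow> A j \<in> {1..2*l} \<and> B j \<in> {1..2*l}" "k \<le> m"
  shows "H (lst (\<lambda>j. if j < k then B j else A j) (\<lambda>j. if j < k then A j else B j) m) = (-1) ^ k * H (lst A B m)"
  using assms(3)
proof (induction k)
  case 0 then show ?case by simp
next
  case (Suc k)
  have km: "k < m" using Suc by simp
  have set: "set (lst (\<lambda>j. if j < k then B j else A j) (\<lambda>j. if j < k then A j else B j) m) \<subseteq> {1..2*l}"
    by (rule set_lst) (use assms(2) in auto)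
  have "H (lst (\<lambda>j. if j < Suc k then B j else A j) (\<lambda>j. if j < Suc k then A j else B j) m) =
     - H (lst (\<lambda>j. if j < k then B j else A j) (\<lambda>j. if j < k then A j else B j) m)"
    unfolding lst_pairswap_step[OF km] using assms(1) set km unfolding alt_elem_def by auto
  then show ?case using Suc by simp
qed

definition rp :: "('a \<Rightarrow> 'a) \<Rightarrow> 'a set \<Rightarrow> 'a \<Rightarrow> 'a" where
  "rp f D = (\<lambda>x. if x \<in> D then f x else x)"

lemma rp_permutes:
  assumes "finite D" "f ` D \<subseteq> D" "inj_on f D"
  shows "rp f D permutes D"
proof (rule bij_imp_permutes)
  have "inj_on (rp f D) D" using assms(3) unfolding rp_def inj_on_def by auto
  moreover have "rp f D ` D = D" using endo_inj_surj[OF assms] unfolding rp_def by auto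
  ultimately show "bij_betw (rp f D) D D" unfolding bij_betw_def by blast
qed (simp add: rp_def)

lemma orbs_rp: "f ` D \<subseteq> D \<Longrightarrow> orbs (rp f D) D = orbs f D"
  by (rule orbs_agree) (auto simp: rp_def)

lemma odd_set: "{i. odd i \<and> i < 2*(m::nat)} = (\<lambda>j. 2*j+1) ` {..<m}"
proof (intro set_eqI iffI)
  fix i assume "i \<in> {i. odd i \<and> i < 2*m}"
  hence h: "odd i" "i < 2*m" by auto
  have "i = 2 * (i div 2) + 1" using h(1) by presburger
  moreover have "i div 2 < m" using h(2) by presburger
  ultimately show "i \<in> (\<lambda>j. 2*j+1) ` {..<m}" by (metis lessThan_iff rev_image_eqI)
next
  fix i assume "i \<in> (\<lambda>j. 2*j+1) ` {..<m}"
  then obtain j where "j < m" "i = 2*j+1" by auto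
  thus "i \<in> {i. odd i \<and> i < 2*m}" by simp
qed

lemma even_set: "{i. even i \<and> 2 \<le> i \<and> i \<le> 2*(m::nat)} = (\<lambda>j. 2*j+2) ` {..<m}"
proof (intro set_eqI iffI)
  fix i assume "i \<in> {i. even i \<and> 2 \<le> i \<and> i \<le> 2*m}"
  hence h: "even i" "2 \<le> i" "i \<le> 2*m" by auto
  have "i = 2 * (i div 2 - 1) + 2" using h(1,2) by presburger
  moreover have "i div 2 - 1 < m" using h by presburger
  ultimately show "i \<in> (\<lambda>j. 2*j+2) ` {..<m}" by (metis lessThan_iff rev_image_eqI)
next
  fix i assume "i \<in> (\<lambda>j. 2*j+2) ` {..<m}"
  then obtain j where "j < m" "i = 2*j+2" by auto
  thus "i \<in> {i. even i \<and> 2 \<le> i \<and> i \<le> 2*m}" by simp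
qed

locale G3 =
  fixes V :: "'v set" and E :: "'e set" and ends :: "'e \<Rightarrow> 'v \<times> 'v"
  assumes gr: "graph V E ends" and eu: "eulerian V E ends"
begin

definition valid where
  "valid \<omega> km kp \<longleftrightarrow> eulerian_orientation V E ends \<omega> \<and> compatible_ordering V E ends \<omega> km kp"

abbreviation mm where "mm v \<equiv> deg E ends v div 2"

lemma finE: "finite E" and finV: "finite V" using gr unfolding graph_def by auto

lemma deg2: "v \<in> V \<Longrightarrow> deg E ends v = 2 * mm v"
  using eu unfolding eulerian_def by auto

lemma ends_V: "e \<in> E \<Longrightarrow> orientation E ends \<omega> \<Longrightarrow> snd (\<omega> e) \<in> V \<and> fst (\<omega> e) \<in> V"
  using gr unfolding graph_def orientation_def by (cases "\<omega> e = ends e") auto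

lemma in_sub: "in_arcs E \<omega> v \<subseteq> E" and out_sub: "out_arcs E \<omega> v \<subseteq> E"
  unfolding in_arcs_def out_arcs_def by auto

context
  fixes \<omega> km kp
  assumes val: "valid \<omega> km kp"
begin

lemma orient: "orientation E ends \<omega>"
  using val unfolding valid_def eulerian_orientation_def by auto

lemma headV: "e \<in> E \<Longrightarrow> snd (\<omega> e) \<in> V" and tailV: "e \<in> E \<Longrightarrow> fst (\<omega> e) \<in> V"
  using ends_V[OF _ orient] by auto

lemma bij_in: "v \<in> V \<Longrightarrow> bij_betw (km v) (in_arcs E \<omega> v) ((\<lambda>j. 2*j+1) ` {..<mm v})"
  using val deg2[of v] odd_set[of "mm v"] unfolding valid_def compatible_ordering_def by auto

lemma bij_out: "v \<in> V \<Longrightarrow> bij_betw (kp v) (out_arcs E \<omega> v) ((\<lambda>j. 2*j+2) ` {..<mm v})"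
  using val deg2[of v] even_set[of "mm v"] unfolding valid_def compatible_ordering_def by auto

lemma card_in: "v \<in> V \<Longrightarrow> card (in_arcs E \<omega> v) = mm v"
  using bij_betw_same_card[OF bij_in] by (simp add: card_image inj_on_def)

lemma card_out: "v \<in> V \<Longrightarrow> card (out_arcs E \<omega> v) = mm v"
  using bij_betw_same_card[OF bij_out] by (simp add: card_image inj_on_def)

lemma arc_in:
  assumes "v \<in> V" "j < mm v"
  shows "arc_lab E \<omega> km kp v (2*j+1) \<in> in_arcs E \<omega> v \<and> km v (arc_lab E \<omega> km kp v (2*j+1)) = 2*j+1"
proof -
  have "\<exists>!e. e \<in> in_arcs E \<omega> v \<and> km v e = 2*j+1"
  proof -
    have "2*j+1 \<in> km v ` in_arcs E \<omega> v" using bij_in[OF assms(1)] assms(2) unfolding bij_betw_def by auto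
    moreover have "inj_on (km v) (in_arcs E \<omega> v)" using bij_in[OF assms(1)] unfolding bij_betw_def by auto
    ultimately show ?thesis unfolding inj_on_def by (metis (no_types, lifting) imageE)
  qed
  from theI'[OF this] show ?thesis unfolding arc_lab_def by simp
qed

lemma arc_in_char:
  assumes "v \<in> V" "e \<in> in_arcs E \<omega> v" "km v e = 2*j+1"
  shows "arc_lab E \<omega> km kp v (2*j+1) = e"
proof -
  have "inj_on (km v) (in_arcs E \<omega> v)" using bij_in[OF assms(1)] unfolding bij_betw_def by auto
  hence "(THE e. e \<in> in_arcs E \<omega> v \<and> km v e = 2*j+1) = e"
    using assms by (intro the_equality) (auto simp: inj_on_def)
  thus ?thesis unfolding arc_lab_def by simp
qed

lemma arc_out:
  assumes "v \<in> V" "j < mm v"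
  shows "arc_lab E \<omega> km kp v (2*j+2) \<in> out_arcs E \<omega> v \<and> kp v (arc_lab E \<omega> km kp v (2*j+2)) = 2*j+2"
proof -
  have "\<exists>!e. e \<in> out_arcs E \<omega> v \<and> kp v e = 2*j+2"
  proof -
    have "2*j+2 \<in> kp v ` out_arcs E \<omega> v" using bij_out[OF assms(1)] assms(2) unfolding bij_betw_def by auto
    moreover have "inj_on (kp v) (out_arcs E \<omega> v)" using bij_out[OF assms(1)] unfolding bij_betw_def by auto
    ultimately show ?thesis unfolding inj_on_def by (metis (no_types, lifting) imageE)
  qed
  from theI'[OF this] show ?thesis unfolding arc_lab_def by simp
qed

lemma arc_out_char:
  assumes "v \<in> V" "e \<in> out_arcs E \<omega> v" "kp v e = 2*j+2"
  shows "arc_lab E \<omega> km kp v (2*j+2) = e"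
proof -
  have "inj_on (kp v) (out_arcs E \<omega> v)" using bij_out[OF assms(1)] unfolding bij_betw_def by auto
  hence "(THE e. e \<in> out_arcs E \<omega> v \<and> kp v e = 2*j+2) = e"
    using assms by (intro the_equality) (auto simp: inj_on_def)
  thus ?thesis unfolding arc_lab_def by simp
qed

lemma km_form: "v \<in> V \<Longrightarrow> e \<in> in_arcs E \<omega> v \<Longrightarrow> \<exists>j<mm v. km v e = 2*j+1"
  using bij_in unfolding bij_betw_def by blast

lemma kp_form: "v \<in> V \<Longrightarrow> e \<in> out_arcs E \<omega> v \<Longrightarrow> \<exists>j<mm v. kp v e = 2*j+2"
  using bij_out unfolding bij_betw_def by blast

lemma in_head: "x \<in> E \<Longrightarrow> x \<in> in_arcs E \<omega> (snd (\<omega> x))"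
  unfolding in_arcs_def by auto

lemma next_prop:
  assumes "x \<in> E"
  shows "next_arc E \<omega> km kp x \<in> out_arcs E \<omega> (snd (\<omega> x)) \<and>
     kp (snd (\<omega> x)) (next_arc E \<omega> km kp x) = km (snd (\<omega> x)) x + 1"
proof -
  let ?v = "snd (\<omega> x)"
  obtain j where j: "j < mm ?v" "km ?v x = 2*j+1" using km_form[OF headV[OF assms] in_head[OF assms]] by blast
  have "km ?v x + 1 = 2*j+2" using j by simp
  thus ?thesis using arc_out[OF headV[OF assms] j(1)] unfolding next_arc_def by simp
qed

lemma next_char:
  assumes "x \<in> E" "y \<in> out_arcs E \<omega> (snd (\<omega> x))" "kp (snd (\<omega> x)) y = km (snd (\<omega> x)) x + 1"
  shows "next_arc E \<omega> km kp x = y"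
proof -
  let ?v = "snd (\<omega> x)"
  have inj: "inj_on (kp ?v) (out_arcs E \<omega> ?v)" using bij_out[OF headV[OF assms(1)]] unfolding bij_betw_def by auto
  have "kp ?v (next_arc E \<omega> km kp x) = kp ?v y" using next_prop[OF assms(1)] assms(3) by simp
  from inj_onD[OF inj this] show ?thesis using next_prop[OF assms(1)] assms(2) by blast
qed

lemma next_E: assumes "x \<in> E" shows "next_arc E \<omega> km kp x \<in> E"
  using next_prop[OF assms] out_sub[of \<omega> "snd (\<omega> x)"] by blast

lemma next_inj: "inj_on (next_arc E \<omega> km kp) E"
proof (rule inj_onI)
  fix x y assume x: "x \<in> E" and y: "y \<in> E" and xy: "next_arc E \<omega> km kp x = next_arc E \<omega> km kp y"
  define z where "z = next_arc E \<omega> km kp x"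
  have zx: "z \<in> out_arcs E \<omega> (snd (\<omega> x))" "kp (snd (\<omega> x)) z = km (snd (\<omega> x)) x + 1"
    using next_prop[OF x] unfolding z_def by auto
  have zy: "z \<in> out_arcs E \<omega> (snd (\<omega> y))" "kp (snd (\<omega> y)) z = km (snd (\<omega> y)) y + 1"
    using next_prop[OF y] unfolding z_def xy by auto
  have hv: "snd (\<omega> x) = snd (\<omega> y)" using zx(1) zy(1) unfolding out_arcs_def by simp
  have k: "km (snd (\<omega> x)) x = km (snd (\<omega> x)) y" using zx(2) zy(2) unfolding hv by simp
  have inj: "inj_on (km (snd (\<omega> x))) (in_arcs E \<omega> (snd (\<omega> x)))"
    using bij_in[OF headV[OF x]] unfolding bij_betw_def by auto
  have "y \<in> in_arcs E \<omega> (snd (\<omega> x))" unfolding hv by (rule in_head[OF y])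
  from inj_onD[OF inj k in_head[OF x] this] show "x = y" .
qed

lemma next_perm: "rp (next_arc E \<omega> km kp) E permutes E"
  using rp_permutes[OF finE _ next_inj] next_E by blast

lemma circuits_orbs: "circuits E \<omega> km kp = orbs (rp (next_arc E \<omega> km kp) E) E"
proof -
  have "circuits E \<omega> km kp = orbs (next_arc E \<omega> km kp) E"
    unfolding circuits_def orbs_def orb_def by (rule refl)
  also have "\<dots> = orbs (rp (next_arc E \<omega> km kp) E) E"
    by (rule orbs_rp[symmetric]) (use next_E in blast)
  finally show ?thesis .
qed

lemma circ_sign:
  "(-1::int) ^ card E = sign (rp (next_arc E \<omega> km kp) E) * (-1) ^ num_circuits E \<omega> km kp"
  unfolding num_circuits_def circuits_orbs by (rule sign_orbs[OF next_perm finE])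

end
end

lemma lst_cong: "(\<And>j. j < m \<Longrightarrow> A j = A' j) \<Longrightarrow> (\<And>j. j < m \<Longrightarrow> B j = B' j) \<Longrightarrow> lst A B m = lst A' B' m"
  unfolding lst_def by (rule map_cong) auto

lemma f_idx_range: "x \<in> {1..2*l} \<Longrightarrow> f_idx l x \<in> {1..2*l}"
  unfolding f_idx_def by auto

lemma lv_eq: "local_val l H E ends \<omega> km kp p v =
   (\<Prod>j<deg E ends v div 2. f_sgn l (p (arc_lab E \<omega> km kp v (2*j+2)))) *
   H (lst (\<lambda>j. p (arc_lab E \<omega> km kp v (2*j+1))) (\<lambda>j. f_idx l (p (arc_lab E \<omega> km kp v (2*j+2)))) (deg E ends v div 2))"
  unfolding local_val_def Let_def concat_lst ..

definition HL :: "nat \<Rightarrow> (nat list \<Rightarrow> complex) \<Rightarrow> 'e set \<Rightarrow> ('e \<Rightarrow> 'v \<times> 'v) \<Rightarrow> ('e \<Rightarrow> 'v \<times> 'v)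
    \<Rightarrow> ('v \<Rightarrow> 'e \<Rightarrow> nat) \<Rightarrow> ('v \<Rightarrow> 'e \<Rightarrow> nat) \<Rightarrow> ('e \<Rightarrow> nat) \<Rightarrow> 'v \<Rightarrow> complex" where
  "HL l H E ends \<omega> km kp p v =
   H (lst (\<lambda>j. p (arc_lab E \<omega> km kp v (2*j+1))) (\<lambda>j. f_idx l (p (arc_lab E \<omega> km kp v (2*j+2)))) (deg E ends v div 2))"

context G3
begin

definition TT where
  "TT l H \<omega> km kp p = (-1) ^ num_circuits E \<omega> km kp * (\<Prod>v\<in>V. local_val l H E ends \<omega> km kp p v)"

lemma sgn_prod:
  assumes val: "valid \<omega> km kp"
  shows "(\<Prod>v\<in>V. \<Prod>j<mm v. g (arc_lab E \<omega> km kp v (2*j+2))) = (\<Prod>e\<in>E. g e)"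
proof -
  have "(\<Prod>j<mm v. g (arc_lab E \<omega> km kp v (2*j+2))) = (\<Prod>e\<in>out_arcs E \<omega> v. g e)" if v: "v \<in> V" for v
  proof (rule prod.reindex_bij_betw)
    show "bij_betw (\<lambda>j. arc_lab E \<omega> km kp v (2*j+2)) {..<mm v} (out_arcs E \<omega> v)"
    proof (rule bij_betw_imageI)
      show "inj_on (\<lambda>j. arc_lab E \<omega> km kp v (2*j+2)) {..<mm v}"
      proof (rule inj_onI)
        fix i j assume ij: "i \<in> {..<mm v}" "j \<in> {..<mm v}"
          and e: "arc_lab E \<omega> km kp v (2*i+2) = arc_lab E \<omega> km kp v (2*j+2)"
        have ki: "kp v (arc_lab E \<omega> km kp v (2*i+2)) = 2*i+2" using arc_out[OF val v, of i] ij(1) by simp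
        have kj: "kp v (arc_lab E \<omega> km kp v (2*j+2)) = 2*j+2" using arc_out[OF val v, of j] ij(2) by simp
        have "2*i+2 = 2*j+2" using ki[unfolded e] kj by simp
        thus "i = j" by simp
      qed
      show "(\<lambda>j. arc_lab E \<omega> km kp v (2*j+2)) ` {..<mm v} = out_arcs E \<omega> v"
      proof
        show "(\<lambda>j. arc_lab E \<omega> km kp v (2*j+2)) ` {..<mm v} \<subseteq> out_arcs E \<omega> v"
          using arc_out[OF val v] by auto
        show "out_arcs E \<omega> v \<subseteq> (\<lambda>j. arc_lab E \<omega> km kp v (2*j+2)) ` {..<mm v}"
        proof
          fix e assume e: "e \<in> out_arcs E \<omega> v"
          then obtain j where j: "j < mm v" "kp v e = 2*j+2" using kp_form[OF val v] by blast
          hence "arc_lab E \<omega> km kp v (2*j+2) = e" using arc_out_char[OF val v e] by simp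
          from this[symmetric] j(1) show "e \<in> (\<lambda>j. arc_lab E \<omega> km kp v (2*j+2)) ` {..<mm v}"
            by (intro image_eqI[where x = j]) auto
        qed
      qed
    qed
  qed
  hence "(\<Prod>v\<in>V. \<Prod>j<mm v. g (arc_lab E \<omega> km kp v (2*j+2))) = (\<Prod>v\<in>V. \<Prod>e\<in>out_arcs E \<omega> v. g e)"
    by (rule prod.cong[OF refl])
  also have "\<dots> = (\<Prod>e\<in>E. g e)"
    unfolding out_arcs_def
    by (rule prod.group[OF finE finV]) (auto intro: tailV[OF val])
  finally show ?thesis .
qed

lemma prodLV:
  assumes val: "valid \<omega> km kp"
  shows "(\<Prod>v\<in>V. local_val l H E ends \<omega> km kp p v) = (\<Prod>e\<in>E. f_sgn l (p e)) * (\<Prod>v\<in>V. HL l H E ends \<omega> km kp p v)"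
  unfolding lv_eq HL_def prod.distrib sgn_prod[OF val, of "\<lambda>e. f_sgn l (p e)"] ..

lemma arc_eq_cong:
  assumes v1: "valid \<omega> km kp" and v2: "valid \<omega> km' kp'"
    and cin: "\<forall>v\<in>V. \<forall>e\<in>in_arcs E \<omega> v. km v e = km' v e"
    and cout: "\<forall>v\<in>V. \<forall>e\<in>out_arcs E \<omega> v. kp v e = kp' v e"
    and v: "v \<in> V" and j: "j < mm v"
  shows "arc_lab E \<omega> km kp v (2*j+1) = arc_lab E \<omega> km' kp' v (2*j+1)"
    and "arc_lab E \<omega> km kp v (2*j+2) = arc_lab E \<omega> km' kp' v (2*j+2)"
proof -
  show "arc_lab E \<omega> km kp v (2*j+1) = arc_lab E \<omega> km' kp' v (2*j+1)"
    using arc_in[OF v1 v j] cin v by (intro arc_in_char[OF v2 v, symmetric]) auto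
  show "arc_lab E \<omega> km kp v (2*j+2) = arc_lab E \<omega> km' kp' v (2*j+2)"
    using arc_out[OF v1 v j] cout v by (intro arc_out_char[OF v2 v, symmetric]) auto
qed

lemma TT_cong:
  assumes v1: "valid \<omega> km kp" and v2: "valid \<omega> km' kp'"
    and cin: "\<forall>v\<in>V. \<forall>e\<in>in_arcs E \<omega> v. km v e = km' v e"
    and cout: "\<forall>v\<in>V. \<forall>e\<in>out_arcs E \<omega> v. kp v e = kp' v e"
  shows "TT l H \<omega> km kp p = TT l H \<omega> km' kp' p"
proof -
  note ae = arc_eq_cong[OF v1 v2 cin cout]
  have nx: "next_arc E \<omega> km kp x = next_arc E \<omega> km' kp' x" if x: "x \<in> E" for x
  proof -
    let ?v = "snd (\<omega> x)"
    have vV: "?v \<in> V" using headV[OF v1 x] .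
    obtain j where j: "j < mm ?v" "km ?v x = 2*j+1" using km_form[OF v1 vV in_head[OF v1 x]] by blast
    have "km' ?v x = 2*j+1" using j cin vV in_head[OF v1 x] by auto
    thus ?thesis unfolding next_arc_def using j ae(2)[OF vV j(1)] by simp
  qed
  have "orbs (next_arc E \<omega> km kp) E = orbs (next_arc E \<omega> km' kp') E"
    by (rule orbs_agree) (use nx next_E[OF v1] in auto)
  hence "circuits E \<omega> km kp = circuits E \<omega> km' kp'"
    unfolding circuits_def orbs_def orb_def .
  moreover have "local_val l H E ends \<omega> km kp p v = local_val l H E ends \<omega> km' kp' p v" if v: "v \<in> V" for v
    unfolding lv_eq using ae[OF v]
    by (intro arg_cong2[where f = "(*)"] prod.cong arg_cong[where f = H] lst_cong) auto
  ultimately show ?thesis unfolding TT_def num_circuits_def by simp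
qed

end

lemma arc_lab_even: "even k \<Longrightarrow> arc_lab E \<omega> km' kp w k = arc_lab E \<omega> km kp w k"
  unfolding arc_lab_def by simp

lemma arc_lab_odd: "odd k \<Longrightarrow> arc_lab E \<omega> km kp' w k = arc_lab E \<omega> km kp w k"
  unfolding arc_lab_def by simp

lemma tr_in: "x \<in> S \<Longrightarrow> a \<in> S \<Longrightarrow> b \<in> S \<Longrightarrow> transpose a b x \<in> S"
  by (auto simp: transpose_def)

lemma cpar: "(-1::int) ^ n = s * (-1) ^ c \<Longrightarrow> (-1::int) ^ n = - s * (-1) ^ c' \<Longrightarrow> s = 1 \<or> s = -1
   \<Longrightarrow> (-1::complex) ^ c' = - ((-1) ^ c)"
proof -
  assume h1: "(-1::int) ^ n = s * (-1) ^ c" and h2: "(-1::int) ^ n = - s * (-1) ^ c'" and s: "s = 1 \<or> s = -1"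
  have "(-1::int) ^ c' = - ((-1) ^ c)" using h1 h2 s by auto
  hence "of_int ((-1::int) ^ c') = (of_int (- ((-1) ^ c)) :: complex)" by simp
  thus ?thesis by simp
qed

context G3
begin

lemma swap_in:
  assumes val: "valid \<omega> km kp" and alt: "alt_elem l H" and v: "v \<in> V"
    and a: "a \<in> in_arcs E \<omega> v" and b: "b \<in> in_arcs E \<omega> v" and ab: "a \<noteq> b"
    and p: "\<forall>e\<in>E. p e \<in> {1..2*l}"
    and km2: "km2 = km(v := (\<lambda>e. km v (transpose a b e)))"
  shows "valid \<omega> km2 kp \<and> TT l H \<omega> km2 kp p = TT l H \<omega> km kp p"
proof -
  let ?t = "transpose a b"
  have aE: "a \<in> E" using subsetD[OF in_sub a] .
  have bE: "b \<in> E" using subsetD[OF in_sub b] .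
  have ha: "snd (\<omega> a) = v" and hb: "snd (\<omega> b) = v" using a b unfolding in_arcs_def by auto
  have bt: "bij_betw ?t (in_arcs E \<omega> v) (in_arcs E \<omega> v)"
    using permutes_imp_bij[OF permutes_swap_id[OF a b]] .
  have val2: "valid \<omega> km2 kp"
    unfolding valid_def compatible_ordering_def
  proof (intro conjI ballI)
    show "eulerian_orientation V E ends \<omega>" using val unfolding valid_def by simp
  next
    fix w assume w: "w \<in> V"
    have co: "bij_betw (km w) (in_arcs E \<omega> w) {i. odd i \<and> i < deg E ends w}"
      "bij_betw (kp w) (out_arcs E \<omega> w) {i. even i \<and> 2 \<le> i \<and> i \<le> deg E ends w}"
      using val w unfolding valid_def compatible_ordering_def by auto
    show "bij_betw (kp w) (out_arcs E \<omega> w) {i. even i \<and> 2 \<le> i \<and> i \<le> deg E ends w}" using co(2) .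
    show "bij_betw (km2 w) (in_arcs E \<omega> w) {i. odd i \<and> i < deg E ends w}"
    proof (cases "w = v")
      case True
      have "bij_betw (km v \<circ> ?t) (in_arcs E \<omega> v) {i. odd i \<and> i < deg E ends v}"
        by (rule bij_betw_trans[OF bt]) (use co(1) True in simp)
      thus ?thesis using True km2 by (simp add: comp_def)
    next
      case False thus ?thesis using co(1) km2 by simp
    qed
  qed
  have arc_other: "arc_lab E \<omega> km2 kp w k = arc_lab E \<omega> km kp w k" if "w \<noteq> v" for w k
    using that km2 unfolding arc_lab_def by simp
  have arc_A: "arc_lab E \<omega> km2 kp v (2*j+1) = ?t (arc_lab E \<omega> km kp v (2*j+1))" if j: "j < mm v" for j
  proof (rule arc_in_char[OF val2 v])
    have e: "arc_lab E \<omega> km kp v (2*j+1) \<in> in_arcs E \<omega> v" "km v (arc_lab E \<omega> km kp v (2*j+1)) = 2*j+1"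
      using arc_in[OF val v j] by auto
    show "?t (arc_lab E \<omega> km kp v (2*j+1)) \<in> in_arcs E \<omega> v" using tr_in[OF e(1) a b] .
    show "km2 v (?t (arc_lab E \<omega> km kp v (2*j+1))) = 2*j+1" using e(2) km2 by simp
  qed
  have nx: "next_arc E \<omega> km2 kp x = next_arc E \<omega> km kp (?t x)" if x: "x \<in> E" for x
  proof (cases "snd (\<omega> x) = v")
    case True
    have tx: "?t x \<in> in_arcs E \<omega> v" using tr_in[OF in_head[OF val x, unfolded True] a b] .
    hence htx: "snd (\<omega> (?t x)) = v" unfolding in_arcs_def by simp
    obtain j where j: "km v (?t x) = 2*j+1" using km_form[OF val v tx] by blast
    have "next_arc E \<omega> km2 kp x = arc_lab E \<omega> km2 kp v (km v (?t x) + 1)"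
      unfolding next_arc_def True using km2 by simp
    also have "\<dots> = arc_lab E \<omega> km kp v (km v (?t x) + 1)" using j by (intro arc_lab_even) simp
    also have "\<dots> = next_arc E \<omega> km kp (?t x)" unfolding next_arc_def htx ..
    finally show ?thesis .
  next
    case False
    hence "x \<noteq> a" "x \<noteq> b" using ha hb by auto
    hence "?t x = x" by simp
    thus ?thesis unfolding next_arc_def using False km2 arc_other[OF False] by simp
  qed
  have rpeq: "rp (next_arc E \<omega> km2 kp) E = rp (next_arc E \<omega> km kp) E \<circ> ?t"
  proof
    fix x show "rp (next_arc E \<omega> km2 kp) E x = (rp (next_arc E \<omega> km kp) E \<circ> ?t) x"
    proof (cases "x \<in> E")
      case True thus ?thesis using nx tr_in[OF True aE bE] unfolding rp_def by simp
    next
      case False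
      hence "?t x = x" using aE bE by (auto simp: transpose_def)
      thus ?thesis using False unfolding rp_def by simp
    qed
  qed
  have perm1: "permutation (rp (next_arc E \<omega> km kp) E)"
    using next_perm[OF val] finE permutation_permutes by blast
  have sg: "sign (rp (next_arc E \<omega> km2 kp) E) = - sign (rp (next_arc E \<omega> km kp) E)"
    unfolding rpeq sign_compose[OF perm1 permutation_swap_id] sign_swap_id using ab by simp
  have c2: "(-1::complex) ^ num_circuits E \<omega> km2 kp = - ((-1) ^ num_circuits E \<omega> km kp)"
    by (rule cpar[OF circ_sign[OF val] circ_sign[OF val2, unfolded sg]]) (rule sign_cases, auto)
  have HLo: "HL l H E ends \<omega> km2 kp p w = HL l H E ends \<omega> km kp p w" if "w \<noteq> v" for w
    unfolding HL_def arc_other[OF that] ..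
  obtain i where i: "i < mm v" "km v a = 2*i+1" using km_form[OF val v a] by blast
  obtain k where k: "k < mm v" "km v b = 2*k+1" using km_form[OF val v b] by blast
  have ik: "i \<noteq> k"
  proof
    assume "i = k"
    hence "km v a = km v b" using i k by simp
    thus False using ab bij_in[OF val v] a b unfolding bij_betw_def inj_on_def by blast
  qed
  have aa: "arc_lab E \<omega> km kp v (2*i+1) = a" using arc_in_char[OF val v a i(2)] .
  have bb: "arc_lab E \<omega> km kp v (2*k+1) = b" using arc_in_char[OF val v b k(2)] .
  have tA: "?t (arc_lab E \<omega> km kp v (2*j+1)) = arc_lab E \<omega> km kp v (2 * transpose i k j + 1)"
    if j: "j < mm v" for j
  proof -
    consider "j = i" | "j = k" | "j \<noteq> i" "j \<noteq> k" by blast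
    then show ?thesis
    proof cases
      case 1 thus ?thesis using aa bb by simp
    next
      case 2 thus ?thesis using aa bb ik by simp
    next
      case 3
      have "km v (arc_lab E \<omega> km kp v (2*j+1)) = 2*j+1" using arc_in[OF val v j] by simp
      hence "arc_lab E \<omega> km kp v (2*j+1) \<noteq> a" "arc_lab E \<omega> km kp v (2*j+1) \<noteq> b"
        using i(2) k(2) 3 by auto
      thus ?thesis using 3 by simp
    qed
  qed
  let ?A = "\<lambda>j. p (arc_lab E \<omega> km kp v (2*j+1))"
  let ?B = "\<lambda>j. f_idx l (p (arc_lab E \<omega> km kp v (2*j+2)))"
  have setl: "set (lst ?A ?B (mm v)) \<subseteq> {1..2*l}"
  proof (rule set_lst)
    fix j assume j: "j < mm v"
    have "arc_lab E \<omega> km kp v (2*j+1) \<in> E" using subsetD[OF in_sub conjunct1[OF arc_in[OF val v j]]] .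
    moreover have "arc_lab E \<omega> km kp v (2*j+2) \<in> E" using subsetD[OF out_sub conjunct1[OF arc_out[OF val v j]]] .
    ultimately show "?A j \<in> {1..2*l} \<and> ?B j \<in> {1..2*l}" using p f_idx_range by blast
  qed
  have HLv: "HL l H E ends \<omega> km2 kp p v = - HL l H E ends \<omega> km kp p v"
  proof -
    have "lst (\<lambda>j. p (arc_lab E \<omega> km2 kp v (2*j+1))) (\<lambda>j. f_idx l (p (arc_lab E \<omega> km2 kp v (2*j+2)))) (mm v)
        = lst (\<lambda>j. ?A (transpose i k j)) ?B (mm v)"
    proof (rule lst_cong)
      fix j assume j: "j < mm v"
      show "p (arc_lab E \<omega> km2 kp v (2*j+1)) = ?A (transpose i k j)" using arc_A[OF j] tA[OF j] by simp
      have "arc_lab E \<omega> km2 kp v (2*j+2) = arc_lab E \<omega> km kp v (2*j+2)" by (rule arc_lab_even) simp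
      thus "f_idx l (p (arc_lab E \<omega> km2 kp v (2*j+2))) = ?B j" by simp
    qed
    thus ?thesis unfolding HL_def using H_swapA[OF alt setl i(1) k(1) ik] by simp
  qed
  have PH: "(\<Prod>w\<in>V. HL l H E ends \<omega> km2 kp p w) = - (\<Prod>w\<in>V. HL l H E ends \<omega> km kp p w)"
  proof -
    have "(\<Prod>w\<in>V. HL l H E ends \<omega> km2 kp p w) = HL l H E ends \<omega> km2 kp p v * (\<Prod>w\<in>V - {v}. HL l H E ends \<omega> km2 kp p w)"
      by (rule prod.remove[OF finV v])
    also have "(\<Prod>w\<in>V - {v}. HL l H E ends \<omega> km2 kp p w) = (\<Prod>w\<in>V - {v}. HL l H E ends \<omega> km kp p w)"
      using HLo by (intro prod.cong) auto
    also have "HL l H E ends \<omega> km2 kp p v * (\<Prod>w\<in>V - {v}. HL l H E ends \<omega> km kp p w) =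
       - (HL l H E ends \<omega> km kp p v * (\<Prod>w\<in>V - {v}. HL l H E ends \<omega> km kp p w))" unfolding HLv by simp
    also have "HL l H E ends \<omega> km kp p v * (\<Prod>w\<in>V - {v}. HL l H E ends \<omega> km kp p w) = (\<Prod>w\<in>V. HL l H E ends \<omega> km kp p w)"
      by (rule prod.remove[OF finV v, symmetric])
    finally show ?thesis .
  qed
  have "TT l H \<omega> km2 kp p = TT l H \<omega> km kp p"
    unfolding TT_def prodLV[OF val] prodLV[OF val2] c2 PH by simp
  thus ?thesis using val2 by simp
qed


lemma swap_out:
  assumes val: "valid \<omega> km kp" and alt: "alt_elem l H" and v: "v \<in> V"
    and a: "a \<in> out_arcs E \<omega> v" and b: "b \<in> out_arcs E \<omega> v" and ab: "a \<noteq> b"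
    and p: "\<forall>e\<in>E. p e \<in> {1..2*l}"
    and kp2: "kp2 = kp(v := (\<lambda>e. kp v (transpose a b e)))"
  shows "valid \<omega> km kp2 \<and> TT l H \<omega> km kp2 p = TT l H \<omega> km kp p"
proof -
  let ?t = "transpose a b"
  have aE: "a \<in> E" using subsetD[OF out_sub a] .
  have bE: "b \<in> E" using subsetD[OF out_sub b] .
  have ha: "fst (\<omega> a) = v" and hb: "fst (\<omega> b) = v" using a b unfolding out_arcs_def by auto
  have bt: "bij_betw ?t (out_arcs E \<omega> v) (out_arcs E \<omega> v)"
    using permutes_imp_bij[OF permutes_swap_id[OF a b]] .
  have val2: "valid \<omega> km kp2"
    unfolding valid_def compatible_ordering_def
  proof (intro conjI ballI)
    show "eulerian_orientation V E ends \<omega>" using val unfolding valid_def by simp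
  next
    fix w assume w: "w \<in> V"
    have co: "bij_betw (km w) (in_arcs E \<omega> w) {i. odd i \<and> i < deg E ends w}"
      "bij_betw (kp w) (out_arcs E \<omega> w) {i. even i \<and> 2 \<le> i \<and> i \<le> deg E ends w}"
      using val w unfolding valid_def compatible_ordering_def by auto
    show "bij_betw (km w) (in_arcs E \<omega> w) {i. odd i \<and> i < deg E ends w}" using co(1) .
    show "bij_betw (kp2 w) (out_arcs E \<omega> w) {i. even i \<and> 2 \<le> i \<and> i \<le> deg E ends w}"
    proof (cases "w = v")
      case True
      have "bij_betw (kp v \<circ> ?t) (out_arcs E \<omega> v) {i. even i \<and> 2 \<le> i \<and> i \<le> deg E ends v}"
        by (rule bij_betw_trans[OF bt]) (use co(2) True in simp)
      thus ?thesis using True kp2 by (simp add: comp_def)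
    next
      case False thus ?thesis using co(2) kp2 by simp
    qed
  qed
  have arc_other: "arc_lab E \<omega> km kp2 w k = arc_lab E \<omega> km kp w k" if "w \<noteq> v" for w k
    using that kp2 unfolding arc_lab_def by simp
  have arc_B: "arc_lab E \<omega> km kp2 v (2*j+2) = ?t (arc_lab E \<omega> km kp v (2*j+2))" if j: "j < mm v" for j
  proof (rule arc_out_char[OF val2 v])
    have e: "arc_lab E \<omega> km kp v (2*j+2) \<in> out_arcs E \<omega> v" "kp v (arc_lab E \<omega> km kp v (2*j+2)) = 2*j+2"
      using arc_out[OF val v j] by auto
    show "?t (arc_lab E \<omega> km kp v (2*j+2)) \<in> out_arcs E \<omega> v" using tr_in[OF e(1) a b] .
    show "kp2 v (?t (arc_lab E \<omega> km kp v (2*j+2))) = 2*j+2" using e(2) kp2 by simp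
  qed
  have nx: "next_arc E \<omega> km kp2 x = ?t (next_arc E \<omega> km kp x)" if x: "x \<in> E" for x
  proof (cases "snd (\<omega> x) = v")
    case True
    obtain j where j: "j < mm v" "km v x = 2*j+1" using km_form[OF val v in_head[OF val x, unfolded True]] by blast
    have "next_arc E \<omega> km kp2 x = arc_lab E \<omega> km kp2 v (2*j+2)"
      unfolding next_arc_def True j(2) by simp
    also have "\<dots> = ?t (arc_lab E \<omega> km kp v (2*j+2))" by (rule arc_B[OF j(1)])
    also have "arc_lab E \<omega> km kp v (2*j+2) = next_arc E \<omega> km kp x"
      unfolding next_arc_def True j(2) by simp
    finally show ?thesis .
  next
    case False
    have "next_arc E \<omega> km kp x \<in> out_arcs E \<omega> (snd (\<omega> x))" using next_prop[OF val x] by simp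
    hence "fst (\<omega> (next_arc E \<omega> km kp x)) \<noteq> v" using False unfolding out_arcs_def by simp
    hence "next_arc E \<omega> km kp x \<noteq> a" "next_arc E \<omega> km kp x \<noteq> b" using ha hb by auto
    hence "?t (next_arc E \<omega> km kp x) = next_arc E \<omega> km kp x" by simp
    thus ?thesis unfolding next_arc_def using arc_other[OF False] by simp
  qed
  have rpeq: "rp (next_arc E \<omega> km kp2) E = ?t \<circ> rp (next_arc E \<omega> km kp) E"
  proof
    fix x show "rp (next_arc E \<omega> km kp2) E x = (?t \<circ> rp (next_arc E \<omega> km kp) E) x"
    proof (cases "x \<in> E")
      case True thus ?thesis using nx unfolding rp_def by simp
    next
      case False
      hence "?t x = x" using aE bE by (auto simp: transpose_def)
      thus ?thesis using False unfolding rp_def by simp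
    qed
  qed
  have perm1: "permutation (rp (next_arc E \<omega> km kp) E)"
    using next_perm[OF val] finE permutation_permutes by blast
  have sg: "sign (rp (next_arc E \<omega> km kp2) E) = - sign (rp (next_arc E \<omega> km kp) E)"
    unfolding rpeq sign_compose[OF permutation_swap_id perm1] sign_swap_id using ab by simp
  have c2: "(-1::complex) ^ num_circuits E \<omega> km kp2 = - ((-1) ^ num_circuits E \<omega> km kp)"
    by (rule cpar[OF circ_sign[OF val] circ_sign[OF val2, unfolded sg]]) (rule sign_cases, auto)
  have HLo: "HL l H E ends \<omega> km kp2 p w = HL l H E ends \<omega> km kp p w" if "w \<noteq> v" for w
    unfolding HL_def arc_other[OF that] ..
  obtain i where i: "i < mm v" "kp v a = 2*i+2" using kp_form[OF val v a] by blast
  obtain k where k: "k < mm v" "kp v b = 2*k+2" using kp_form[OF val v b] by blast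
  have ik: "i \<noteq> k"
  proof
    assume "i = k"
    hence "kp v a = kp v b" using i k by simp
    thus False using ab bij_out[OF val v] a b unfolding bij_betw_def inj_on_def by blast
  qed
  have aa: "arc_lab E \<omega> km kp v (2*i+2) = a" using arc_out_char[OF val v a i(2)] .
  have bb: "arc_lab E \<omega> km kp v (2*k+2) = b" using arc_out_char[OF val v b k(2)] .
  have tA: "?t (arc_lab E \<omega> km kp v (2*j+2)) = arc_lab E \<omega> km kp v (2 * transpose i k j + 2)"
    if j: "j < mm v" for j
  proof -
    consider "j = i" | "j = k" | "j \<noteq> i" "j \<noteq> k" by blast
    then show ?thesis
    proof cases
      case 1 thus ?thesis using aa bb by simp
    next
      case 2 thus ?thesis using aa bb ik by simp
    next
      case 3
      have "kp v (arc_lab E \<omega> km kp v (2*j+2)) = 2*j+2" using arc_out[OF val v j] by simp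
      hence "arc_lab E \<omega> km kp v (2*j+2) \<noteq> a" "arc_lab E \<omega> km kp v (2*j+2) \<noteq> b"
        using i(2) k(2) 3 by auto
      thus ?thesis using 3 by simp
    qed
  qed
  let ?A = "\<lambda>j. p (arc_lab E \<omega> km kp v (2*j+1))"
  let ?B = "\<lambda>j. f_idx l (p (arc_lab E \<omega> km kp v (2*j+2)))"
  have setl: "set (lst ?A ?B (mm v)) \<subseteq> {1..2*l}"
  proof (rule set_lst)
    fix j assume j: "j < mm v"
    have "arc_lab E \<omega> km kp v (2*j+1) \<in> E" using subsetD[OF in_sub conjunct1[OF arc_in[OF val v j]]] .
    moreover have "arc_lab E \<omega> km kp v (2*j+2) \<in> E" using subsetD[OF out_sub conjunct1[OF arc_out[OF val v j]]] .
    ultimately show "?A j \<in> {1..2*l} \<and> ?B j \<in> {1..2*l}" using p f_idx_range by blast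
  qed
  have HLv: "HL l H E ends \<omega> km kp2 p v = - HL l H E ends \<omega> km kp p v"
  proof -
    have "lst (\<lambda>j. p (arc_lab E \<omega> km kp2 v (2*j+1))) (\<lambda>j. f_idx l (p (arc_lab E \<omega> km kp2 v (2*j+2)))) (mm v)
        = lst ?A (\<lambda>j. ?B (transpose i k j)) (mm v)"
    proof (rule lst_cong)
      fix j assume j: "j < mm v"
      show "f_idx l (p (arc_lab E \<omega> km kp2 v (2*j+2))) = ?B (transpose i k j)" using arc_B[OF j] tA[OF j] by simp
      have "arc_lab E \<omega> km kp2 v (2*j+1) = arc_lab E \<omega> km kp v (2*j+1)" by (rule arc_lab_odd) simp
      thus "p (arc_lab E \<omega> km kp2 v (2*j+1)) = ?A j" by simp
    qed
    thus ?thesis unfolding HL_def using H_swapB[OF alt setl i(1) k(1) ik] by simp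
  qed
  have PH: "(\<Prod>w\<in>V. HL l H E ends \<omega> km kp2 p w) = - (\<Prod>w\<in>V. HL l H E ends \<omega> km kp p w)"
  proof -
    have "(\<Prod>w\<in>V. HL l H E ends \<omega> km kp2 p w) = HL l H E ends \<omega> km kp2 p v * (\<Prod>w\<in>V - {v}. HL l H E ends \<omega> km kp2 p w)"
      by (rule prod.remove[OF finV v])
    also have "(\<Prod>w\<in>V - {v}. HL l H E ends \<omega> km kp2 p w) = (\<Prod>w\<in>V - {v}. HL l H E ends \<omega> km kp p w)"
      using HLo by (intro prod.cong) auto
    also have "HL l H E ends \<omega> km kp2 p v * (\<Prod>w\<in>V - {v}. HL l H E ends \<omega> km kp p w) =
       - (HL l H E ends \<omega> km kp p v * (\<Prod>w\<in>V - {v}. HL l H E ends \<omega> km kp p w))" unfolding HLv by simp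
    also have "HL l H E ends \<omega> km kp p v * (\<Prod>w\<in>V - {v}. HL l H E ends \<omega> km kp p w) = (\<Prod>w\<in>V. HL l H E ends \<omega> km kp p w)"
      by (rule prod.remove[OF finV v, symmetric])
    finally show ?thesis .
  qed
  have "TT l H \<omega> km kp2 p = TT l H \<omega> km kp p"
    unfolding TT_def prodLV[OF val] prodLV[OF val2] c2 PH by simp
  thus ?thesis using val2 by simp
qed

end

context G3
begin

definition dis_in where
  "dis_in \<omega> km km' = {(v,e). v \<in> V \<and> e \<in> in_arcs E \<omega> v \<and> km v e \<noteq> km' v e}"
definition dis_out where
  "dis_out \<omega> kp kp' = {(v,e). v \<in> V \<and> e \<in> out_arcs E \<omega> v \<and> kp v e \<noteq> kp' v e}"

lemma fin_dis: "finite (dis_in \<omega> km km')" "finite (dis_out \<omega> kp kp')"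
proof -
  have "dis_in \<omega> km km' \<subseteq> V \<times> E" unfolding dis_in_def in_arcs_def by auto
  thus "finite (dis_in \<omega> km km')" using finite_subset finV finE by blast
  have "dis_out \<omega> kp kp' \<subseteq> V \<times> E" unfolding dis_out_def out_arcs_def by auto
  thus "finite (dis_out \<omega> kp kp')" using finite_subset finV finE by blast
qed

lemma TT_indep:
  assumes alt: "alt_elem l H" and p: "\<forall>e\<in>E. p e \<in> {1..2*l}"
  shows "valid \<omega> km kp \<Longrightarrow> valid \<omega> km' kp' \<Longrightarrow> TT l H \<omega> km kp p = TT l H \<omega> km' kp' p"
proof (induction "card (dis_in \<omega> km km') + card (dis_out \<omega> kp kp')" arbitrary: km kp rule: less_induct)
  case less
  note val = less.prems(1) and val' = less.prems(2)
  show ?case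
  proof (cases "dis_in \<omega> km km' = {}")
    case False
    then obtain v a where va: "(v,a) \<in> dis_in \<omega> km km'" by auto
    hence v: "v \<in> V" and a: "a \<in> in_arcs E \<omega> v" and ne: "km v a \<noteq> km' v a" unfolding dis_in_def by auto
    obtain j where j: "j < mm v" "km' v a = 2*j+1" using km_form[OF val' v a] by blast
    define b where "b = arc_lab E \<omega> km kp v (2*j+1)"
    have b: "b \<in> in_arcs E \<omega> v" "km v b = km' v a" using arc_in[OF val v j(1)] j(2) unfolding b_def by auto
    have ab: "a \<noteq> b" using ne b(2) by auto
    define km2 where "km2 = km(v := (\<lambda>e. km v (transpose a b e)))"
    have sw: "valid \<omega> km2 kp \<and> TT l H \<omega> km2 kp p = TT l H \<omega> km kp p"
      by (rule swap_in[OF val alt v a b(1) ab p km2_def])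
    have sub: "dis_in \<omega> km2 km' \<subseteq> dis_in \<omega> km km' - {(v,a)}"
    proof
      fix x assume x: "x \<in> dis_in \<omega> km2 km'"
      then obtain w e where we: "x = (w,e)" "w \<in> V" "e \<in> in_arcs E \<omega> w" "km2 w e \<noteq> km' w e"
        unfolding dis_in_def by auto
      show "x \<in> dis_in \<omega> km km' - {(v,a)}"
      proof (cases "w = v")
        case False thus ?thesis using we km2_def unfolding dis_in_def by auto
      next
        case True
        show ?thesis
        proof (cases "e = a")
          case True thus ?thesis using we \<open>w = v\<close> b(2) km2_def by simp
        next
          case ea: False
          show ?thesis
          proof (cases "e = b")
            case True
            have "km' v a \<noteq> km' v b"
              using ab bij_in[OF val' v] a b(1) unfolding bij_betw_def inj_on_def by blast
            thus ?thesis using we \<open>w = v\<close> True b ea unfolding dis_in_def by auto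
          next
            case False
            thus ?thesis using we \<open>w = v\<close> ea km2_def unfolding dis_in_def by auto
          qed
        qed
      qed
    qed
    have "card (dis_in \<omega> km2 km') < card (dis_in \<omega> km km')"
    proof -
      have "card (dis_in \<omega> km2 km') \<le> card (dis_in \<omega> km km' - {(v,a)})"
        by (rule card_mono) (use sub fin_dis in auto)
      also have "\<dots> < card (dis_in \<omega> km km')" using card_Diff1_less[OF fin_dis(1) va] .
      finally show ?thesis .
    qed
    hence "card (dis_in \<omega> km2 km') + card (dis_out \<omega> kp kp') < card (dis_in \<omega> km km') + card (dis_out \<omega> kp kp')" by simp
    hence "TT l H \<omega> km2 kp p = TT l H \<omega> km' kp' p" using less.hyps[of km2 kp] sw val' by blast
    thus ?thesis using sw by simp
  next
    case din: True
    show ?thesis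
    proof (cases "dis_out \<omega> kp kp' = {}")
      case False
      then obtain v a where va: "(v,a) \<in> dis_out \<omega> kp kp'" by auto
      hence v: "v \<in> V" and a: "a \<in> out_arcs E \<omega> v" and ne: "kp v a \<noteq> kp' v a" unfolding dis_out_def by auto
      obtain j where j: "j < mm v" "kp' v a = 2*j+2" using kp_form[OF val' v a] by blast
      define b where "b = arc_lab E \<omega> km kp v (2*j+2)"
      have b: "b \<in> out_arcs E \<omega> v" "kp v b = kp' v a" using arc_out[OF val v j(1)] j(2) unfolding b_def by auto
      have ab: "a \<noteq> b" using ne b(2) by auto
      define kp2 where "kp2 = kp(v := (\<lambda>e. kp v (transpose a b e)))"
      have sw: "valid \<omega> km kp2 \<and> TT l H \<omega> km kp2 p = TT l H \<omega> km kp p"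
        by (rule swap_out[OF val alt v a b(1) ab p kp2_def])
      have sub: "dis_out \<omega> kp2 kp' \<subseteq> dis_out \<omega> kp kp' - {(v,a)}"
      proof
        fix x assume x: "x \<in> dis_out \<omega> kp2 kp'"
        then obtain w e where we: "x = (w,e)" "w \<in> V" "e \<in> out_arcs E \<omega> w" "kp2 w e \<noteq> kp' w e"
          unfolding dis_out_def by auto
        show "x \<in> dis_out \<omega> kp kp' - {(v,a)}"
        proof (cases "w = v")
          case False thus ?thesis using we kp2_def unfolding dis_out_def by auto
        next
          case True
          show ?thesis
          proof (cases "e = a")
            case True thus ?thesis using we \<open>w = v\<close> b(2) kp2_def by simp
          next
            case ea: False
            show ?thesis
            proof (cases "e = b")
              case True
              have "kp' v a \<noteq> kp' v b"
                using ab bij_out[OF val' v] a b(1) unfolding bij_betw_def inj_on_def by blast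
              thus ?thesis using we \<open>w = v\<close> True b ea unfolding dis_out_def by auto
            next
              case False
              thus ?thesis using we \<open>w = v\<close> ea kp2_def unfolding dis_out_def by auto
            qed
          qed
        qed
      qed
      have "card (dis_out \<omega> kp2 kp') < card (dis_out \<omega> kp kp')"
      proof -
        have "card (dis_out \<omega> kp2 kp') \<le> card (dis_out \<omega> kp kp' - {(v,a)})"
          by (rule card_mono) (use sub fin_dis in auto)
        also have "\<dots> < card (dis_out \<omega> kp kp')" using card_Diff1_less[OF fin_dis(2) va] .
        finally show ?thesis .
      qed
      hence "card (dis_in \<omega> km km') + card (dis_out \<omega> kp2 kp') < card (dis_in \<omega> km km') + card (dis_out \<omega> kp kp')" by simp
      hence "TT l H \<omega> km kp2 p = TT l H \<omega> km' kp' p" using less.hyps[of km kp2] sw val' by blast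
      thus ?thesis using sw by simp
    next
      case True
      show ?thesis
      proof (rule TT_cong[OF val val'])
        show "\<forall>v\<in>V. \<forall>e\<in>in_arcs E \<omega> v. km v e = km' v e" using din unfolding dis_in_def by auto
        show "\<forall>v\<in>V. \<forall>e\<in>out_arcs E \<omega> v. kp v e = kp' v e" using True unfolding dis_out_def by auto
      qed
    qed
  qed
qed

end

lemma bij_piece:
  fixes d r c :: nat and f g :: "'a \<Rightarrow> nat"
  assumes f: "bij_betw f P {0..<d}" and g: "bij_betw g Q {0..<r}" and PD: "P \<subseteq> D" and QD: "Q \<inter> D = {}"
  shows "bij_betw (\<lambda>e. if e \<in> D then 2 * f e + c else 2 * (d + g e) + c) (P \<union> Q) ((\<lambda>j. 2*j + c) ` {..<d+r})"
proof -
  define h0 where "h0 = (\<lambda>e. if e \<in> D then f e else d + g e)"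
  have b1: "bij_betw h0 P {0..<d}"
    using f by (rule bij_betw_cong[THEN iffD1, rotated]) (use PD in \<open>auto simp: h0_def\<close>)
  have bd: "bij_betw (\<lambda>x. d + x) {0..<r} {d..<d+r}"
    by (rule bij_betw_imageI) (auto simp: inj_on_def image_iff intro!: exI[where x="_ - d"])
  have b2: "bij_betw h0 Q {d..<d+r}"
  proof -
    have "bij_betw ((\<lambda>x. d + x) \<circ> g) Q {d..<d+r}" by (rule bij_betw_trans[OF g bd])
    thus ?thesis by (rule bij_betw_cong[THEN iffD1, rotated]) (use QD in \<open>auto simp: h0_def\<close>)
  qed
  have "bij_betw h0 (P \<union> Q) ({0..<d} \<union> {d..<d+r})"
    by (rule bij_betw_combine[OF b1 b2]) auto
  moreover have "{0..<d} \<union> {d..<d+r} = {..<d+r}" by auto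
  ultimately have b: "bij_betw h0 (P \<union> Q) {..<d+r}" by simp
  have bj: "bij_betw (\<lambda>j. 2*j+c) {..<d+r} ((\<lambda>j. 2*j + c) ` {..<d+r})"
    by (rule bij_betw_imageI) (auto simp: inj_on_def)
  have "bij_betw ((\<lambda>j. 2*j+c) \<circ> h0) (P \<union> Q) ((\<lambda>j. 2*j + c) ` {..<d+r})" by (rule bij_betw_trans[OF b bj])
  moreover have "(\<lambda>j. 2*j+c) \<circ> h0 = (\<lambda>e. if e \<in> D then 2 * f e + c else 2 * (d + g e) + c)"
    by (auto simp: h0_def)
  ultimately show ?thesis by simp
qed

locale G7 = G3 +
  fixes \<omega>1 km1 kp1 \<omega>2 km2 kp2
  assumes v1: "valid \<omega>1 km1 kp1" and v2: "valid \<omega>2 km2 kp2"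
begin

definition "D = {e\<in>E. \<omega>1 e \<noteq> \<omega>2 e}"
definition "iD v = {e\<in>D. snd (\<omega>1 e) = v}"
definition "oD v = {e\<in>D. fst (\<omega>1 e) = v}"
definition "iR v = {e\<in>E - D. snd (\<omega>1 e) = v}"
definition "oR v = {e\<in>E - D. fst (\<omega>1 e) = v}"
definition "dd v = card (iD v)"
definition "rr v = card (iR v)"
definition "gX v = (SOME h. bij_betw h (iD v) {0..<card (iD v)})"
definition "gY v = (SOME h. bij_betw h (oD v) {0..<card (oD v)})"
definition "gU v = (SOME h. bij_betw h (iR v) {0..<card (iR v)})"
definition "gW v = (SOME h. bij_betw h (oR v) {0..<card (oR v)})"

definition "K1m v e = (if e \<in> D then 2 * gX v e + 1 else 2 * (dd v + gU v e) + 1)"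
definition "K1p v e = (if e \<in> D then 2 * gY v e + 2 else 2 * (dd v + gW v e) + 2)"
definition "K2m v e = (if e \<in> D then 2 * gY v e + 1 else 2 * (dd v + gU v e) + 1)"
definition "K2p v e = (if e \<in> D then 2 * gX v e + 2 else 2 * (dd v + gW v e) + 2)"

lemma DE: "D \<subseteq> E" unfolding D_def by auto

lemma or1: "orientation E ends \<omega>1" and or2: "orientation E ends \<omega>2"
  using v1 v2 unfolding valid_def eulerian_orientation_def by auto

lemma om_D: "e \<in> D \<Longrightarrow> \<omega>2 e = prod.swap (\<omega>1 e)"
  using or1 or2 unfolding D_def orientation_def by (cases "ends e") fastforce

lemma om_R: "e \<in> E \<Longrightarrow> e \<notin> D \<Longrightarrow> \<omega>2 e = \<omega>1 e"
  unfolding D_def by auto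

lemma in1: "in_arcs E \<omega>1 v = iD v \<union> iR v" unfolding in_arcs_def iD_def iR_def using DE by auto
lemma out1: "out_arcs E \<omega>1 v = oD v \<union> oR v" unfolding out_arcs_def oD_def oR_def using DE by auto
lemma in2: "in_arcs E \<omega>2 v = oD v \<union> iR v"
proof -
  have "e \<in> in_arcs E \<omega>2 v \<longleftrightarrow> e \<in> oD v \<union> iR v" for e
  proof (cases "e \<in> D")
    case True thus ?thesis using DE om_D[OF True] unfolding in_arcs_def oD_def iR_def by (cases "\<omega>1 e") auto
  next
    case False thus ?thesis using om_R[OF _ False] unfolding in_arcs_def oD_def iR_def by auto
  qed
  thus ?thesis by blast
qed
lemma out2: "out_arcs E \<omega>2 v = iD v \<union> oR v"
proof -
  have "e \<in> out_arcs E \<omega>2 v \<longleftrightarrow> e \<in> iD v \<union> oR v" for e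
  proof (cases "e \<in> D")
    case True thus ?thesis using DE om_D[OF True] unfolding out_arcs_def iD_def oR_def by (cases "\<omega>1 e") auto
  next
    case False thus ?thesis using om_R[OF _ False] unfolding out_arcs_def iD_def oR_def by auto
  qed
  thus ?thesis by blast
qed

lemma fins: "finite (iD v)" "finite (oD v)" "finite (iR v)" "finite (oR v)"
  unfolding iD_def oD_def iR_def oR_def using DE by (auto intro: finite_subset[OF _ finE])

lemma disj: "iD v \<inter> iR v = {}" "oD v \<inter> oR v = {}" "oD v \<inter> iR v = {}" "iD v \<inter> oR v = {}"
  unfolding iD_def oD_def iR_def oR_def by auto

lemma cards:
  assumes v: "v \<in> V"
  shows "card (oD v) = dd v" "card (oR v) = rr v" "mm v = dd v + rr v"
proof -
  have e1: "card (in_arcs E \<omega>1 v) = card (out_arcs E \<omega>1 v)"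
    using v1 v unfolding valid_def eulerian_orientation_def by auto
  have e2: "card (in_arcs E \<omega>2 v) = card (out_arcs E \<omega>2 v)"
    using v2 v unfolding valid_def eulerian_orientation_def by auto
  have c1: "card (in_arcs E \<omega>1 v) = card (iD v) + card (iR v)" unfolding in1 using fins disj by (simp add: card_Un_disjoint)
  have c2: "card (out_arcs E \<omega>1 v) = card (oD v) + card (oR v)" unfolding out1 using fins disj by (simp add: card_Un_disjoint)
  have c3: "card (in_arcs E \<omega>2 v) = card (oD v) + card (iR v)" unfolding in2 using fins disj by (simp add: card_Un_disjoint)
  have c4: "card (out_arcs E \<omega>2 v) = card (iD v) + card (oR v)" unfolding out2 using fins disj by (simp add: card_Un_disjoint)
  show "card (oD v) = dd v" "card (oR v) = rr v" using e1 e2 c1 c2 c3 c4 unfolding dd_def rr_def by linarith+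
  show "mm v = dd v + rr v" using card_in[OF v1 v] c1 unfolding dd_def rr_def by simp
qed

lemma gbij:
  assumes v: "v \<in> V"
  shows "bij_betw (gX v) (iD v) {0..<dd v}" "bij_betw (gY v) (oD v) {0..<dd v}"
    "bij_betw (gU v) (iR v) {0..<rr v}" "bij_betw (gW v) (oR v) {0..<rr v}"
proof -
  show "bij_betw (gX v) (iD v) {0..<dd v}" unfolding gX_def dd_def
    by (rule someI_ex[OF ex_bij_betw_finite_nat[OF fins(1)]])
  show "bij_betw (gY v) (oD v) {0..<dd v}" unfolding gY_def cards(1)[OF v, symmetric]
    by (rule someI_ex[OF ex_bij_betw_finite_nat[OF fins(2)]])
  show "bij_betw (gU v) (iR v) {0..<rr v}" unfolding gU_def rr_def
    by (rule someI_ex[OF ex_bij_betw_finite_nat[OF fins(3)]])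
  show "bij_betw (gW v) (oR v) {0..<rr v}" unfolding gW_def cards(2)[OF v, symmetric]
    by (rule someI_ex[OF ex_bij_betw_finite_nat[OF fins(4)]])
qed

lemma sub_D: "iD v \<subseteq> D" "oD v \<subseteq> D" and nD: "iR v \<inter> D = {}" "oR v \<inter> D = {}"
  unfolding iD_def oD_def iR_def oR_def by auto

lemma deg_sets:
  assumes v: "v \<in> V"
  shows "{i. odd i \<and> i < deg E ends v} = (\<lambda>j. 2*j+1) ` {..<dd v + rr v}"
    "{i. even i \<and> 2 \<le> i \<and> i \<le> deg E ends v} = (\<lambda>j. 2*j+2) ` {..<dd v + rr v}"
proof -
  have "deg E ends v = 2 * (dd v + rr v)" using deg2[OF v] cards(3)[OF v] by simp
  thus "{i. odd i \<and> i < deg E ends v} = (\<lambda>j. 2*j+1) ` {..<dd v + rr v}"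
    "{i. even i \<and> 2 \<le> i \<and> i \<le> deg E ends v} = (\<lambda>j. 2*j+2) ` {..<dd v + rr v}"
    by (simp_all only: odd_set even_set)
qed

lemma valid1: "valid \<omega>1 K1m K1p"
  unfolding valid_def compatible_ordering_def
proof (intro conjI ballI)
  show "eulerian_orientation V E ends \<omega>1" using v1 unfolding valid_def by simp
next
  fix v assume v: "v \<in> V"
  show "bij_betw (K1m v) (in_arcs E \<omega>1 v) {i. odd i \<and> i < deg E ends v}"
    unfolding in1 deg_sets[OF v] K1m_def[abs_def]
    using bij_piece[OF gbij(1)[OF v] gbij(3)[OF v] sub_D(1) nD(1), of 1] by simp
  show "bij_betw (K1p v) (out_arcs E \<omega>1 v) {i. even i \<and> 2 \<le> i \<and> i \<le> deg E ends v}"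
    unfolding out1 deg_sets[OF v] K1p_def[abs_def]
    using bij_piece[OF gbij(2)[OF v] gbij(4)[OF v] sub_D(2) nD(2), of 2] by simp
qed

lemma valid2: "valid \<omega>2 K2m K2p"
  unfolding valid_def compatible_ordering_def
proof (intro conjI ballI)
  show "eulerian_orientation V E ends \<omega>2" using v2 unfolding valid_def by simp
next
  fix v assume v: "v \<in> V"
  show "bij_betw (K2m v) (in_arcs E \<omega>2 v) {i. odd i \<and> i < deg E ends v}"
    unfolding in2 deg_sets[OF v] K2m_def[abs_def]
    using bij_piece[OF gbij(2)[OF v] gbij(3)[OF v] sub_D(2) nD(1), of 1] by simp
  show "bij_betw (K2p v) (out_arcs E \<omega>2 v) {i. even i \<and> 2 \<le> i \<and> i \<le> deg E ends v}"
    unfolding out2 deg_sets[OF v] K2p_def[abs_def]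
    using bij_piece[OF gbij(1)[OF v] gbij(4)[OF v] sub_D(1) nD(2), of 2] by simp
qed

end

lemma funpow_id_eq: "(id ^^ k) = (id :: 'a \<Rightarrow> 'a)"
  by (induction k) auto

lemma orb_sub:
  assumes S: "finite S" and f: "f ` S \<subseteq> S" and g: "g ` S \<subseteq> S"
    and gf: "\<forall>x\<in>S. g (f x) = x" and fg: "\<forall>x\<in>S. f (g x) = x" and a: "a \<in> S"
  shows "orb g a \<subseteq> orb f a"
proof
  have inj: "inj_on f S" by (rule inj_on_inverseI[of S g]) (use gf in auto)
  have P: "rp f S permutes S" by (rule rp_permutes[OF S f inj])
  have perm: "permutation (rp f S)" using P S permutation_permutes by blast
  obtain n where n: "(rp f S ^^ n) = id" "n > 0" using permutation_is_nilpotent[OF perm] by blast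
  have ag: "((rp f S) ^^ k) y = (f ^^ k) y" if "y \<in> S" for k y
    using funpow_agree[of S "rp f S" f y k] f that unfolding rp_def by auto
  have fid: "(f ^^ (n * k)) y = y" if "y \<in> S" for k y
  proof -
    have "(rp f S ^^ (n * k)) = ((rp f S ^^ n) ^^ k)" by (simp add: funpow_mult)
    hence "(rp f S ^^ (n * k)) = id" using n(1) funpow_id_eq by simp
    thus ?thesis using ag[OF that, of "n * k"] by simp
  qed
  have gS: "(g ^^ k) a \<in> S" for k using g a by (induction k) auto
  have fg_k: "(f ^^ k) ((g ^^ k) a) = a" for k
  proof (induction k)
    case (Suc k)
    have "(g ^^ Suc k) a = g ((g ^^ k) a)" by simp
    moreover have "(f ^^ Suc k) y = (f ^^ k) (f y)" for y by (simp add: funpow_swap1)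
    ultimately have "(f ^^ Suc k) ((g ^^ Suc k) a) = (f ^^ k) (f (g ((g ^^ k) a)))" by simp
    also have "f (g ((g ^^ k) a)) = (g ^^ k) a" using fg gS by blast
    finally show ?case using Suc by simp
  qed simp
  fix x assume "x \<in> orb g a"
  then obtain k where x: "x = (g ^^ k) a" unfolding orb_def by auto
  have nk: "n * k \<ge> k" using n(2) by simp
  have "x = (f ^^ (n * k)) x" using fid gS x by simp
  also have "\<dots> = (f ^^ (n * k - k)) ((f ^^ k) x)"
  proof -
    have "(f ^^ (n * k - k + k)) x = (f ^^ (n * k - k)) ((f ^^ k) x)" by (simp add: funpow_add)
    moreover have "n * k - k + k = n * k" using nk by simp
    ultimately show ?thesis by simp
  qed
  also have "(f ^^ k) x = a" using fg_k x by simp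
  finally show "x \<in> orb f a" unfolding orb_def by blast
qed

lemma orb_inv:
  assumes S: "finite S" and f: "f ` S \<subseteq> S" and gf: "\<forall>x\<in>S. g (f x) = x" and a: "a \<in> S"
  shows "orb f a = orb g a"
proof -
  have inj: "inj_on f S" by (rule inj_on_inverseI[of S g]) (use gf in auto)
  have fS: "f ` S = S" by (rule endo_inj_surj[OF S f inj])
  have g: "g ` S \<subseteq> S" and fg: "\<forall>x\<in>S. f (g x) = x"
  proof -
    show "g ` S \<subseteq> S"
    proof
      fix y assume "y \<in> g ` S"
      then obtain x where "x \<in> S" "y = g x" by auto
      moreover then obtain z where "z \<in> S" "x = f z" using fS by auto
      ultimately show "y \<in> S" using gf by auto
    qed
    show "\<forall>x\<in>S. f (g x) = x"
    proof
      fix x assume "x \<in> S"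
      then obtain z where "z \<in> S" "x = f z" using fS by auto
      thus "f (g x) = x" using gf by auto
    qed
  qed
  show ?thesis using orb_sub[OF S f g gf fg a] orb_sub[OF S g f fg gf a] by blast
qed

context G7
begin

abbreviation "N1 \<equiv> next_arc E \<omega>1 K1m K1p"
abbreviation "N2 \<equiv> next_arc E \<omega>2 K2m K2p"

lemma lab_facts:
  assumes v: "v \<in> V"
  shows "e \<in> iD v \<Longrightarrow> K1m v e = 2 * gX v e + 1 \<and> K2p v e = 2 * gX v e + 2 \<and> gX v e < dd v"
    "e \<in> oD v \<Longrightarrow> K1p v e = 2 * gY v e + 2 \<and> K2m v e = 2 * gY v e + 1 \<and> gY v e < dd v"
    "e \<in> iR v \<Longrightarrow> K1m v e = 2 * (dd v + gU v e) + 1 \<and> K2m v e = 2 * (dd v + gU v e) + 1"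
    "e \<in> oR v \<Longrightarrow> K1p v e = 2 * (dd v + gW v e) + 2 \<and> K2p v e = 2 * (dd v + gW v e) + 2"
proof -
  show "e \<in> iD v \<Longrightarrow> K1m v e = 2 * gX v e + 1 \<and> K2p v e = 2 * gX v e + 2 \<and> gX v e < dd v"
    using sub_D(1) gbij(1)[OF v] unfolding K1m_def K2p_def bij_betw_def by auto
  show "e \<in> oD v \<Longrightarrow> K1p v e = 2 * gY v e + 2 \<and> K2m v e = 2 * gY v e + 1 \<and> gY v e < dd v"
    using sub_D(2) gbij(2)[OF v] unfolding K1p_def K2m_def bij_betw_def by auto
  show "e \<in> iR v \<Longrightarrow> K1m v e = 2 * (dd v + gU v e) + 1 \<and> K2m v e = 2 * (dd v + gU v e) + 1"
    using nD(1) unfolding K1m_def K2m_def by auto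
  show "e \<in> oR v \<Longrightarrow> K1p v e = 2 * (dd v + gW v e) + 2 \<and> K2p v e = 2 * (dd v + gW v e) + 2"
    using nD(2) unfolding K1p_def K2p_def by auto
qed

lemma N_D:
  assumes e: "e \<in> D"
  shows "N1 e \<in> D \<and> N2 (N1 e) = e"
proof -
  have eE: "e \<in> E" using e DE by auto
  define v where "v = snd (\<omega>1 e)"
  have v: "v \<in> V" unfolding v_def using headV[OF valid1 eE] .
  have eiD: "e \<in> iD v" unfolding iD_def v_def using e by auto
  have np: "N1 e \<in> oD v \<union> oR v" "K1p v (N1 e) = K1m v e + 1"
    using next_prop[OF valid1 eE] unfolding v_def[symmetric] out1 by auto
  have le: "K1m v e = 2 * gX v e + 1" "gX v e < dd v" using lab_facts(1)[OF v eiD] by auto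
  have yD: "N1 e \<in> oD v"
  proof (rule ccontr)
    assume "N1 e \<notin> oD v"
    hence "N1 e \<in> oR v" using np(1) by auto
    hence "K1p v (N1 e) = 2 * (dd v + gW v (N1 e)) + 2" using lab_facts(4)[OF v] by auto
    thus False using np(2) le by simp
  qed
  have ly: "K1p v (N1 e) = 2 * gY v (N1 e) + 2" "K2m v (N1 e) = 2 * gY v (N1 e) + 1"
    using lab_facts(2)[OF v yD] by auto
  have yE: "N1 e \<in> E" using yD sub_D DE by blast
  have hy: "snd (\<omega>2 (N1 e)) = v" using om_D yD sub_D unfolding oD_def by auto
  have "N2 (N1 e) = e"
  proof (rule next_char[OF valid2 yE])
    show "e \<in> out_arcs E \<omega>2 (snd (\<omega>2 (N1 e)))" unfolding hy out2 using eiD by simp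
    show "K2p (snd (\<omega>2 (N1 e))) e = K2m (snd (\<omega>2 (N1 e))) (N1 e) + 1"
      unfolding hy using lab_facts(1)[OF v eiD] ly np(2) le by simp
  qed
  thus ?thesis using yD sub_D by blast
qed

lemma N_R:
  assumes e: "e \<in> E - D"
  shows "N1 e \<in> E - D \<and> N2 e = N1 e"
proof -
  have eE: "e \<in> E" using e by auto
  define v where "v = snd (\<omega>1 e)"
  have v: "v \<in> V" unfolding v_def using headV[OF valid1 eE] .
  have eiR: "e \<in> iR v" unfolding iR_def v_def using e by auto
  have np: "N1 e \<in> oD v \<union> oR v" "K1p v (N1 e) = K1m v e + 1"
    using next_prop[OF valid1 eE] unfolding v_def[symmetric] out1 by auto
  have le: "K1m v e = 2 * (dd v + gU v e) + 1" "K2m v e = 2 * (dd v + gU v e) + 1"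
    using lab_facts(3)[OF v eiR] by auto
  have yR: "N1 e \<in> oR v"
  proof (rule ccontr)
    assume "N1 e \<notin> oR v"
    hence "N1 e \<in> oD v" using np(1) by auto
    hence "K1p v (N1 e) = 2 * gY v (N1 e) + 2" "gY v (N1 e) < dd v" using lab_facts(2)[OF v] by auto
    thus False using np(2) le by simp
  qed
  have hy: "snd (\<omega>2 e) = v" using om_R[OF eE] e unfolding v_def by auto
  have "N2 e = N1 e"
  proof (rule next_char[OF valid2 eE])
    show "N1 e \<in> out_arcs E \<omega>2 (snd (\<omega>2 e))" unfolding hy out2 using yR by simp
    show "K2p (snd (\<omega>2 e)) (N1 e) = K2m (snd (\<omega>2 e)) e + 1"
      unfolding hy using lab_facts(4)[OF v yR] np(2) le by simp
  qed
  moreover have "N1 e \<in> E - D" using yR unfolding oR_def by auto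
  ultimately show ?thesis by simp
qed

lemma circ_eq: "num_circuits E \<omega>1 K1m K1p = num_circuits E \<omega>2 K2m K2p"
proof -
  have "orb N1 a = orb N2 a" if a: "a \<in> E" for a
  proof (cases "a \<in> D")
    case True
    show ?thesis
    proof (rule orb_inv[OF finite_subset[OF DE finE] _ _ True])
      show "N1 ` D \<subseteq> D" using N_D by blast
      show "\<forall>x\<in>D. N2 (N1 x) = x" using N_D by blast
    qed
  next
    case False
    show ?thesis
    proof (rule orb_agree[of "E - D"])
      show "\<forall>x\<in>E - D. N1 x = N2 x" using N_R by simp
      show "N1 ` (E - D) \<subseteq> E - D" using N_R by blast
    qed (use a False in simp)
  qed
  hence "orbs N1 E = orbs N2 E" unfolding orbs_image by (rule image_cong[OF refl])
  thus ?thesis unfolding num_circuits_def circuits_def orbs_def orb_def by simp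
qed

end

lemma f_idx_inv: "x \<in> {1..2*l} \<Longrightarrow> f_idx l (f_idx l x) = x"
  unfolding f_idx_def by auto

lemma f_sgn_idx: "x \<in> {1..2*l} \<Longrightarrow> f_sgn l (f_idx l x) = - f_sgn l x"
  unfolding f_idx_def f_sgn_def by auto

context G7
begin

definition "flip l p = (\<lambda>e. if e \<in> D then f_idx l (p e) else p e)"

abbreviation "arc1 \<equiv> arc_lab E \<omega>1 K1m K1p"
abbreviation "arc2 \<equiv> arc_lab E \<omega>2 K2m K2p"

lemma arc_swap:
  assumes v: "v \<in> V" and j: "j < dd v"
  shows "arc2 v (2*j+1) = arc1 v (2*j+2) \<and> arc2 v (2*j+2) = arc1 v (2*j+1) \<and> arc1 v (2*j+1) \<in> D \<and> arc1 v (2*j+2) \<in> D"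
proof -
  have jm: "j < mm v" using j cards(3)[OF v] by simp
  have y: "arc1 v (2*j+2) \<in> oD v \<union> oR v" "K1p v (arc1 v (2*j+2)) = 2*j+2"
    using arc_out[OF valid1 v jm] unfolding out1 by auto
  have yD: "arc1 v (2*j+2) \<in> oD v"
  proof (rule ccontr)
    assume "arc1 v (2*j+2) \<notin> oD v"
    hence "arc1 v (2*j+2) \<in> oR v" using y(1) by auto
    thus False using lab_facts(4)[OF v] y(2) j by force
  qed
  have x: "arc1 v (2*j+1) \<in> iD v \<union> iR v" "K1m v (arc1 v (2*j+1)) = 2*j+1"
    using arc_in[OF valid1 v jm] unfolding in1 by auto
  have xD: "arc1 v (2*j+1) \<in> iD v"
  proof (rule ccontr)
    assume "arc1 v (2*j+1) \<notin> iD v"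
    hence "arc1 v (2*j+1) \<in> iR v" using x(1) by auto
    thus False using lab_facts(3)[OF v] x(2) j by force
  qed
  have a1: "arc2 v (2*j+1) = arc1 v (2*j+2)"
  proof (rule arc_in_char[OF valid2 v])
    show "arc1 v (2*j+2) \<in> in_arcs E \<omega>2 v" unfolding in2 using yD by simp
    show "K2m v (arc1 v (2*j+2)) = 2*j+1" using lab_facts(2)[OF v yD] y(2) by simp
  qed
  have a2: "arc2 v (2*j+2) = arc1 v (2*j+1)"
  proof (rule arc_out_char[OF valid2 v])
    show "arc1 v (2*j+1) \<in> out_arcs E \<omega>2 v" unfolding out2 using xD by simp
    show "K2p v (arc1 v (2*j+1)) = 2*j+2" using lab_facts(1)[OF v xD] x(2) by simp
  qed
  show ?thesis using a1 a2 xD yD sub_D by blast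
qed

lemma arc_same:
  assumes v: "v \<in> V" and j: "dd v \<le> j" "j < mm v"
  shows "arc2 v (2*j+1) = arc1 v (2*j+1) \<and> arc2 v (2*j+2) = arc1 v (2*j+2) \<and> arc1 v (2*j+1) \<notin> D \<and> arc1 v (2*j+2) \<notin> D"
proof -
  have y: "arc1 v (2*j+2) \<in> oD v \<union> oR v" "K1p v (arc1 v (2*j+2)) = 2*j+2"
    using arc_out[OF valid1 v j(2)] unfolding out1 by auto
  have yR: "arc1 v (2*j+2) \<in> oR v"
  proof (rule ccontr)
    assume "arc1 v (2*j+2) \<notin> oR v"
    hence "arc1 v (2*j+2) \<in> oD v" using y(1) by auto
    thus False using lab_facts(2)[OF v] y(2) j by force
  qed
  have x: "arc1 v (2*j+1) \<in> iD v \<union> iR v" "K1m v (arc1 v (2*j+1)) = 2*j+1"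
    using arc_in[OF valid1 v j(2)] unfolding in1 by auto
  have xR: "arc1 v (2*j+1) \<in> iR v"
  proof (rule ccontr)
    assume "arc1 v (2*j+1) \<notin> iR v"
    hence "arc1 v (2*j+1) \<in> iD v" using x(1) by auto
    thus False using lab_facts(1)[OF v] x(2) j by force
  qed
  have a1: "arc2 v (2*j+1) = arc1 v (2*j+1)"
  proof (rule arc_in_char[OF valid2 v])
    show "arc1 v (2*j+1) \<in> in_arcs E \<omega>2 v" unfolding in2 using xR by simp
    show "K2m v (arc1 v (2*j+1)) = 2*j+1" using lab_facts(3)[OF v xR] x(2) by simp
  qed
  have a2: "arc2 v (2*j+2) = arc1 v (2*j+2)"
  proof (rule arc_out_char[OF valid2 v])
    show "arc1 v (2*j+2) \<in> out_arcs E \<omega>2 v" unfolding out2 using yR by simp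
    show "K2p v (arc1 v (2*j+2)) = 2*j+2" using lab_facts(4)[OF v yR] y(2) by simp
  qed
  show ?thesis using a1 a2 xR yR nD by blast
qed

lemma HL_rel:
  assumes alt: "alt_elem l H" and p: "\<forall>e\<in>E. p e \<in> {1..2*l}" and v: "v \<in> V"
  shows "HL l H E ends \<omega>2 K2m K2p (flip l p) v = (-1) ^ dd v * HL l H E ends \<omega>1 K1m K1p p v"
proof -
  let ?A = "\<lambda>j. p (arc1 v (2*j+1))"
  let ?B = "\<lambda>j. f_idx l (p (arc1 v (2*j+2)))"
  have rng: "?A j \<in> {1..2*l} \<and> ?B j \<in> {1..2*l}" if j: "j < mm v" for j
  proof -
    have "arc1 v (2*j+1) \<in> E" using subsetD[OF in_sub conjunct1[OF arc_in[OF valid1 v j]]] .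
    moreover have "arc1 v (2*j+2) \<in> E" using subsetD[OF out_sub conjunct1[OF arc_out[OF valid1 v j]]] .
    ultimately show ?thesis using p f_idx_range by blast
  qed
  have "lst (\<lambda>j. flip l p (arc2 v (2*j+1))) (\<lambda>j. f_idx l (flip l p (arc2 v (2*j+2)))) (mm v) =
     lst (\<lambda>j. if j < dd v then ?B j else ?A j) (\<lambda>j. if j < dd v then ?A j else ?B j) (mm v)"
  proof (rule lst_cong)
    fix j assume j: "j < mm v"
    show "flip l p (arc2 v (2*j+1)) = (if j < dd v then ?B j else ?A j)"
    proof (cases "j < dd v")
      case True thus ?thesis using arc_swap[OF v True] unfolding flip_def by simp
    next
      case False thus ?thesis using arc_same[OF v _ j] unfolding flip_def by simp
    qed
    show "f_idx l (flip l p (arc2 v (2*j+2))) = (if j < dd v then ?A j else ?B j)"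
    proof (cases "j < dd v")
      case True thus ?thesis using arc_swap[OF v True] f_idx_inv rng[OF j] unfolding flip_def by simp
    next
      case False thus ?thesis using arc_same[OF v _ j] unfolding flip_def by simp
    qed
  qed
  moreover have dm: "dd v \<le> mm v" using cards(3)[OF v] by simp
  ultimately show ?thesis unfolding HL_def
    using H_pairswap[where A = ?A and B = ?B and m = "mm v" and k = "dd v", OF alt rng dm] by simp
qed

lemma sum_dd: "(\<Sum>v\<in>V. dd v) = card D"
proof -
  have "(\<Sum>v\<in>V. dd v) = (\<Sum>v\<in>V. \<Sum>e\<in>{e\<in>D. snd (\<omega>1 e) = v}. 1)" unfolding dd_def iD_def by simp
  also have "\<dots> = (\<Sum>e\<in>D. 1)"
    by (rule sum.group[OF finite_subset[OF DE finE] finV]) (use DE headV[OF v1] in auto)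
  finally show ?thesis by simp
qed

lemma TT_rel:
  assumes alt: "alt_elem l H" and p: "\<forall>e\<in>E. p e \<in> {1..2*l}"
  shows "TT l H \<omega>2 K2m K2p (flip l p) = TT l H \<omega>1 K1m K1p p"
proof -
  have s: "(\<Prod>e\<in>E. f_sgn l (flip l p e)) = (-1) ^ card D * (\<Prod>e\<in>E. f_sgn l (p e))"
  proof -
    have "(\<Prod>e\<in>E. f_sgn l (flip l p e)) = (\<Prod>e\<in>E. (if e \<in> D then -1 else 1) * f_sgn l (p e))"
      using p f_sgn_idx unfolding flip_def by (intro prod.cong) auto
    also have "\<dots> = (\<Prod>e\<in>E. (if e \<in> D then -1 else 1)) * (\<Prod>e\<in>E. f_sgn l (p e))" by (rule prod.distrib)
    also have "(\<Prod>e\<in>E. (if e \<in> D then -1 else 1::complex)) = (-1) ^ card D"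
    proof -
      have "(\<Prod>e\<in>E. (if e \<in> D then -1 else 1::complex)) = (\<Prod>e\<in>E \<inter> {x. x \<in> D}. -1) * (\<Prod>e\<in>E \<inter> - {x. x \<in> D}. 1)"
        by (rule prod.If_cases[OF finE])
      moreover have "E \<inter> {x. x \<in> D} = D" using DE by auto
      ultimately show ?thesis by simp
    qed
    finally show ?thesis .
  qed
  have h: "(\<Prod>v\<in>V. HL l H E ends \<omega>2 K2m K2p (flip l p) v) = (-1) ^ card D * (\<Prod>v\<in>V. HL l H E ends \<omega>1 K1m K1p p v)"
  proof -
    have "(\<Prod>v\<in>V. HL l H E ends \<omega>2 K2m K2p (flip l p) v) = (\<Prod>v\<in>V. (-1) ^ dd v * HL l H E ends \<omega>1 K1m K1p p v)"
      using HL_rel[OF alt p] by (intro prod.cong) auto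
    also have "\<dots> = (\<Prod>v\<in>V. (-1) ^ dd v) * (\<Prod>v\<in>V. HL l H E ends \<omega>1 K1m K1p p v)" by (rule prod.distrib)
    also have "(\<Prod>v\<in>V. (-1::complex) ^ dd v) = (-1) ^ card D" unfolding sum_dd[symmetric] power_sum ..
    finally show ?thesis .
  qed
  have sq: "(-1::complex) ^ card D * (-1) ^ card D = 1" by (simp add: power_add[symmetric])
  show ?thesis unfolding TT_def prodLV[OF valid1] prodLV[OF valid2] circ_eq s h
    using sq by (simp add: algebra_simps)
qed

end

context G3
begin

lemma TT_cong_p:
  assumes val: "valid \<omega> km kp" and pq: "\<forall>e\<in>E. p e = q e"
  shows "TT l H \<omega> km kp p = TT l H \<omega> km kp q"
proof -
  have "(\<Prod>e\<in>E. f_sgn l (p e)) = (\<Prod>e\<in>E. f_sgn l (q e))" using pq by (intro prod.cong) auto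
  moreover have "HL l H E ends \<omega> km kp p v = HL l H E ends \<omega> km kp q v" if v: "v \<in> V" for v
  proof -
    have "lst (\<lambda>j. p (arc_lab E \<omega> km kp v (2*j+1))) (\<lambda>j. f_idx l (p (arc_lab E \<omega> km kp v (2*j+2)))) (mm v)
      = lst (\<lambda>j. q (arc_lab E \<omega> km kp v (2*j+1))) (\<lambda>j. f_idx l (q (arc_lab E \<omega> km kp v (2*j+2)))) (mm v)"
    proof (rule lst_cong)
      fix j assume j: "j < mm v"
      have "arc_lab E \<omega> km kp v (2*j+1) \<in> E" using subsetD[OF in_sub conjunct1[OF arc_in[OF val v j]]] .
      thus "p (arc_lab E \<omega> km kp v (2*j+1)) = q (arc_lab E \<omega> km kp v (2*j+1))" using pq by blast
      have "arc_lab E \<omega> km kp v (2*j+2) \<in> E" using subsetD[OF out_sub conjunct1[OF arc_out[OF val v j]]] .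
      thus "f_idx l (p (arc_lab E \<omega> km kp v (2*j+2))) = f_idx l (q (arc_lab E \<omega> km kp v (2*j+2)))" using pq by simp
    qed
    thus ?thesis unfolding HL_def by simp
  qed
  hence "(\<Prod>v\<in>V. HL l H E ends \<omega> km kp p v) = (\<Prod>v\<in>V. HL l H E ends \<omega> km kp q v)" by (intro prod.cong) auto
  ultimately show ?thesis unfolding TT_def prodLV[OF val] by simp
qed

lemma s_phi_TT: "s_phi l H V E ends \<phi> \<omega> km kp = (\<Sum>\<psi>\<in>PiE E (\<lambda>_. {0, l}). TT l H \<omega> km kp (\<lambda>e. \<phi> e + \<psi> e))"
  unfolding s_phi_def TT_def sum_distrib_left ..

lemma s_h_TT: "s_h l H V E ends \<omega> km kp = (\<Sum>q\<in>PiE E (\<lambda>_. {1..2*l}). TT l H \<omega> km kp q)"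
  unfolding s_h_def TT_def sum_distrib_left ..

end

context G7
begin

lemma main_phi:
  assumes alt: "alt_elem l H" and ph: "\<forall>e\<in>E. \<phi> e \<in> {1..l}"
  shows "s_phi l H V E ends \<phi> \<omega>1 km1 kp1 = s_phi l H V E ends \<phi> \<omega>2 km2 kp2"
proof -
  let ?P = "PiE E (\<lambda>_. {0, l})"
  define sg where "sg = (\<lambda>\<psi> e. if e \<in> D then l - \<psi> e else (\<psi> e :: nat))"
  have rng: "\<forall>e\<in>E. \<phi> e + \<psi> e \<in> {1..2*l}" if psi: "\<psi> \<in> ?P" for \<psi>
  proof
    fix e assume e: "e \<in> E"
    have "\<phi> e \<in> {1..l}" "\<psi> e \<in> {0, l}" using ph psi e by (auto simp: PiE_iff)
    thus "\<phi> e + \<psi> e \<in> {1..2*l}" by auto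
  qed
  have step: "TT l H \<omega>1 km1 kp1 (\<lambda>e. \<phi> e + \<psi> e) = TT l H \<omega>2 km2 kp2 (\<lambda>e. \<phi> e + sg \<psi> e)"
    if psi: "\<psi> \<in> ?P" for \<psi>
  proof -
    have "TT l H \<omega>1 km1 kp1 (\<lambda>e. \<phi> e + \<psi> e) = TT l H \<omega>1 K1m K1p (\<lambda>e. \<phi> e + \<psi> e)"
      by (rule TT_indep[OF alt rng[OF psi] v1 valid1])
    also have "\<dots> = TT l H \<omega>2 K2m K2p (flip l (\<lambda>e. \<phi> e + \<psi> e))"
      by (rule TT_rel[OF alt rng[OF psi], symmetric])
    also have "\<dots> = TT l H \<omega>2 K2m K2p (\<lambda>e. \<phi> e + sg \<psi> e)"
    proof (rule TT_cong_p[OF valid2], intro ballI)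
      fix e assume e: "e \<in> E"
      have "\<phi> e \<in> {1..l}" "\<psi> e \<in> {0, l}" using ph e psi by (auto simp: PiE_iff)
      thus "flip l (\<lambda>e. \<phi> e + \<psi> e) e = \<phi> e + sg \<psi> e"
        unfolding flip_def sg_def f_idx_def by auto
    qed
    also have "\<dots> = TT l H \<omega>2 km2 kp2 (\<lambda>e. \<phi> e + sg \<psi> e)"
    proof (rule TT_indep[OF alt _ valid2 v2])
      show "\<forall>e\<in>E. \<phi> e + sg \<psi> e \<in> {1..2*l}"
      proof
        fix e assume e: "e \<in> E"
        have "\<phi> e \<in> {1..l}" "\<psi> e \<in> {0, l}" using ph psi e by (auto simp: PiE_iff)
        thus "\<phi> e + sg \<psi> e \<in> {1..2*l}" unfolding sg_def by auto
      qed
    qed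
    finally show ?thesis .
  qed
  have "s_phi l H V E ends \<phi> \<omega>1 km1 kp1 = (\<Sum>\<psi>\<in>?P. TT l H \<omega>2 km2 kp2 (\<lambda>e. \<phi> e + sg \<psi> e))"
    unfolding s_phi_TT using step by (intro sum.cong) auto
  also have "\<dots> = (\<Sum>\<psi>\<in>?P. TT l H \<omega>2 km2 kp2 (\<lambda>e. \<phi> e + \<psi> e))"
  proof -
    have inv: "sg (sg \<psi>) = \<psi>" if psi: "\<psi> \<in> ?P" for \<psi>
    proof
      fix e show "sg (sg \<psi>) e = \<psi> e"
      proof (cases "e \<in> D")
        case True
        hence "e \<in> E" using DE by auto
        hence "\<psi> e \<in> {0, l}" using psi by (auto simp: PiE_iff)
        thus ?thesis using True unfolding sg_def by auto
      qed (simp add: sg_def)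
    qed
    have mem: "sg \<psi> \<in> ?P" if psi: "\<psi> \<in> ?P" for \<psi>
      using psi DE by (auto simp: PiE_iff sg_def extensional_def)
    show ?thesis by (rule sum.reindex_bij_witness[where i = sg and j = sg]) (use inv mem in auto)
  qed
  also have "\<dots> = s_phi l H V E ends \<phi> \<omega>2 km2 kp2" unfolding s_phi_TT ..
  finally show ?thesis .
qed

lemma main_h:
  assumes alt: "alt_elem l H"
  shows "s_h l H V E ends \<omega>1 km1 kp1 = s_h l H V E ends \<omega>2 km2 kp2"
proof -
  let ?Q = "PiE E (\<lambda>_. {1..2*l})"
  have rng: "\<forall>e\<in>E. q e \<in> {1..2*l}" if "q \<in> ?Q" for q
    using that by (auto simp: PiE_iff)
  have step: "TT l H \<omega>1 km1 kp1 q = TT l H \<omega>2 km2 kp2 (flip l q)" if q: "q \<in> ?Q" for q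
  proof -
    have "TT l H \<omega>1 km1 kp1 q = TT l H \<omega>1 K1m K1p q"
      by (rule TT_indep[OF alt rng[OF q] v1 valid1])
    also have "\<dots> = TT l H \<omega>2 K2m K2p (flip l q)"
      by (rule TT_rel[OF alt rng[OF q], symmetric])
    also have "\<dots> = TT l H \<omega>2 km2 kp2 (flip l q)"
    proof (rule TT_indep[OF alt _ valid2 v2])
      show "\<forall>e\<in>E. flip l q e \<in> {1..2*l}" using rng[OF q] f_idx_range unfolding flip_def by auto
    qed
    finally show ?thesis .
  qed
  have "s_h l H V E ends \<omega>1 km1 kp1 = (\<Sum>q\<in>?Q. TT l H \<omega>2 km2 kp2 (flip l q))"
    unfolding s_h_TT using step by (intro sum.cong) auto
  also have "\<dots> = (\<Sum>q\<in>?Q. TT l H \<omega>2 km2 kp2 q)"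
  proof -
    have inv: "flip l (flip l q) = q" if q: "q \<in> ?Q" for q
    proof
      fix e show "flip l (flip l q) e = q e"
      proof (cases "e \<in> D")
        case True
        hence "e \<in> E" using DE by auto
        hence "q e \<in> {1..2*l}" using q by (auto simp: PiE_iff)
        thus ?thesis using True f_idx_inv unfolding flip_def by auto
      qed (simp add: flip_def)
    qed
    have mem: "flip l q \<in> ?Q" if q: "q \<in> ?Q" for q
      using q DE f_idx_range by (auto simp: PiE_iff flip_def extensional_def)
    show ?thesis by (rule sum.reindex_bij_witness[where i = "flip l" and j = "flip l"]) (use inv mem in auto)
  qed
  also have "\<dots> = s_h l H V E ends \<omega>2 km2 kp2" unfolding s_h_TT ..
  finally show ?thesis .
qed

end

theorem lemma2:
  fixes l :: nat and H :: "nat list \<Rightarrow> complex"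
    and V :: "'v set" and E :: "'e set" and ends :: "'e \<Rightarrow> 'v \<times> 'v"
    and \<phi> :: "'e \<Rightarrow> nat"
    and \<omega>1 \<omega>2 :: "'e \<Rightarrow> 'v \<times> 'v"
    and km1 kp1 km2 kp2 :: "'v \<Rightarrow> 'e \<Rightarrow> nat"
  assumes "alt_elem l H"
    and "graph V E ends" and "eulerian V E ends"
    and "\<forall>e\<in>E. \<phi> e \<in> {1..l}"
    and "eulerian_orientation V E ends \<omega>1" and "compatible_ordering V E ends \<omega>1 km1 kp1"
    and "eulerian_orientation V E ends \<omega>2" and "compatible_ordering V E ends \<omega>2 km2 kp2"
  shows "s_phi l H V E ends \<phi> \<omega>1 km1 kp1 = s_phi l H V E ends \<phi> \<omega>2 km2 kp2
       \<and> s_h l H V E ends \<omega>1 km1 kp1 = s_h l H V E ends \<omega>2 km2 kp2"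
proof -
  interpret G3 V E ends by unfold_locales (use assms(2,3) in auto)
  interpret G7 V E ends \<omega>1 km1 kp1 \<omega>2 km2 kp2
    by unfold_locales (use assms(5-8) in \<open>auto simp: valid_def\<close>)
  show ?thesis using main_phi[OF assms(1,4)] main_h[OF assms(1)] by simp
qed

end
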